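(* Assume (C1) and (C2), let $\epsilon>0$, and let $L$ be the operator on $\mathscr{C}$ given by $L=\sum_{k\in\mathbb{Z}_K}\sum_{j\in\mathbb{Z}_M}\big\{\frac12(\partial_{k,j+1}-\partial_{k,j})^2-\frac12(u_{k,j+1}-u_{k,j})(\partial_{k,j+1}-\partial_{k,j})+\epsilon B_{k,j}(u)\partial_{k,j}\big\}$ (the generator of the coupled Sasamoto–Spohn dynamics). Then for all $f,g\in\mathscr{C}$, $\int (Lf)\,g\,d\mu_{K,M}=\int f\,(L^*g)\,d\mu_{K,M}$, where $L^*=\sum_{k\in\mathbb{Z}_K}\sum_{j\in\mathbb{Z}_M}\big\{\frac12(\partial_{k,j+1}-\partial_{k,j})^2-\frac12(u_{k,j+1}-u_{k,j})(\partial_{k,j+1}-\partial_{k,j})-\epsilon B_{k,j}(u)\partial_{k,j}\big\}$.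
   Context: Fix integers $K,M\ge1$; $\mathbb{Z}_m=\mathbb{Z}/m\mathbb{Z}$, $\mathbb{Z}_m^*=\mathbb{Z}_m\setminus\{0\}$; component indices modulo $K$, site indices modulo $M$. Real coefficients $\alpha_k$, $\beta_k^l,\gamma_k^l$ ($l\in\mathbb{Z}_K^*$), $\lambda_k^{k-l,k-l'}$ ($l,l'\in\mathbb{Z}_K^*$, $l\ne l'$) are given. For $u\in\mathbb{R}^{\mathbb{Z}_K\times\mathbb{Z}_M}$: $w_{k,j}=\frac13(u_{k,j}^2+u_{k,j}u_{k,j+1}+u_{k,j+1}^2)$, $b_{k,j}^l=\frac12(u_{k,j}u_{k+l,j}+u_{k,j+1}u_{k+l,j+1})$, $r_{k,j}^l=u_{k-l,j}u_{k-l,j+1}$, $p_{k,j}^{l,l'}=\frac16(2u_{k-l,j}u_{k-l',j}+u_{k-l,j}u_{k-l',j+1}+u_{k-l,j+1}u_{k-l',j}+2u_{k-l,j+1}u_{k-l',j+1})$, $G_{k,j}=\alpha_k w_{k,j}+\sum_{l\in\mathbb{Z}_K^*}\beta_k^l b_{k,j}^l+\sum_{l\in\mathbb{Z}_K^*}\gamma_k^l r_{k,j}^l+\sum_{l\in\mathbb{Z}_K^*}\sum_{l'\in\mathbb{Z}_K^*,l'\ne l}\lambda_k^{k-l,k-l'}p_{k,j}^{l,l'}$, $B_{k,j}(u)=G_{k,j}-G_{k,j-1}$. (C1) $\beta_k^a=2\gamma_{k+a}^a$ for all $k$, $a\in\mathbb{Z}_K^*$; (C2) $\lambda_k^{k-a,k-a'}=\lambda_k^{k-a',k-a}=\lambda_{k-a}^{k,k-a'}$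 for all $k$ and $a,a'\in\mathbb{Z}_K^*$, $a\ne a'$. $\mu_{K,M}$ is the product standard Gaussian measure on $\mathbb{R}^{\mathbb{Z}_K\times\mathbb{Z}_M}$. $\mathscr{C}$ is the space of $C^2$ functions $\mathbb{R}^{\mathbb{Z}_K\times\mathbb{Z}_M}\to\mathbb{R}$ whose derivatives up to order two grow at most polynomially; $\partial_{k,j}=\partial/\partial u_{k,j}$. *)

theory Defs
  imports "HOL-Probability.Probability"
begin

text \<open>Configurations u are functions on the index set Z_K x Z_M, represented by
  {0..<K} x {0..<M} (integers); indices are always reduced mod K resp. mod M.
  Outside the index set u is arbitrary (in the product measure space it is undefined).\<close>

definition idx :: "int \<Rightarrow> int \<Rightarrow> (int \<times> int) set" where
  "idx K M = {0..<K} \<times> {0..<M}"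

definition cfg :: "int \<Rightarrow> int \<Rightarrow> (int \<times> int \<Rightarrow> real) set" where
  "cfg K M = PiE (idx K M) (\<lambda>_. UNIV)"

definition U :: "int \<Rightarrow> int \<Rightarrow> (int \<times> int \<Rightarrow> real) \<Rightarrow> int \<Rightarrow> int \<Rightarrow> real" where
  "U K M u k j = u (k mod K, j mod M)"

definition pd :: "int \<Rightarrow> int \<Rightarrow> int \<Rightarrow> int \<Rightarrow> ((int \<times> int \<Rightarrow> real) \<Rightarrow> real)
    \<Rightarrow> (int \<times> int \<Rightarrow> real) \<Rightarrow> real" where
  "pd K M k j f u = deriv (\<lambda>t. f (u((k mod K, j mod M) := t))) (u (k mod K, j mod M))"

definition partially_diff :: "int \<Rightarrow> int \<Rightarrow> ((int \<times> int \<Rightarrow> real) \<Rightarrow> real) \<Rightarrow> bool" where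
  "partially_diff K M f \<longleftrightarrow> (\<forall>i\<in>idx K M. \<forall>u\<in>cfg K M.
      (\<lambda>t. f (u(i := t))) differentiable (at (u i)))"

definition poly_growth :: "int \<Rightarrow> int \<Rightarrow> ((int \<times> int \<Rightarrow> real) \<Rightarrow> real) \<Rightarrow> bool" where
  "poly_growth K M f \<longleftrightarrow> (\<exists>C (N::nat). \<forall>u\<in>cfg K M.
      \<bar>f u\<bar> \<le> C * (1 + (\<Sum>i\<in>idx K M. (u i)\<^sup>2)) ^ N)"

definition classC :: "int \<Rightarrow> int \<Rightarrow> ((int \<times> int \<Rightarrow> real) \<Rightarrow> real) set" where
  "classC K M = {f.
      continuous_on (cfg K M) f \<and> poly_growth K M f \<and> partially_diff K M f \<and>
      (\<forall>(k,j)\<in>idx K M. continuous_on (cfg K M) (pd K M k j f) \<and> poly_growth K M (pd K M k j f)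
         \<and> partially_diff K M (pd K M k j f) \<and>
         (\<forall>(k',j')\<in>idx K M. continuous_on (cfg K M) (pd K M k' j' (pd K M k j f))
            \<and> poly_growth K M (pd K M k' j' (pd K M k j f))))}"

definition mu :: "int \<Rightarrow> int \<Rightarrow> (int \<times> int \<Rightarrow> real) measure" where
  "mu K M = PiM (idx K M) (\<lambda>_. density lborel std_normal_density)"

definition w_fn where
  "w_fn K M u k j = (1/3) * ((U K M u k j)\<^sup>2 + U K M u k j * U K M u k (j+1) + (U K M u k (j+1))\<^sup>2)"

definition b_fn where
  "b_fn K M u l k j = (1/2) * (U K M u k j * U K M u (k+l) j + U K M u k (j+1) * U K M u (k+l) (j+1))"

definition r_fn where
  "r_fn K M u l k j = U K M u (k-l) j * U K M u (k-l) (j+1)"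

definition p_fn where
  "p_fn K M u l l' k j = (1/6) * (2 * U K M u (k-l) j * U K M u (k-l') j
      + U K M u (k-l) j * U K M u (k-l') (j+1) + U K M u (k-l) (j+1) * U K M u (k-l') j
      + 2 * U K M u (k-l) (j+1) * U K M u (k-l') (j+1))"

text \<open>Coefficients: alpha k = alpha_k, beta k l = beta_k^l, gamma k l = gamma_k^l,
  lam k a b = lambda_k^{a,b}; all indices are elements of {0..<K} (= Z_K).\<close>
definition G_fn :: "int \<Rightarrow> int \<Rightarrow> (int \<Rightarrow> real) \<Rightarrow> (int \<Rightarrow> int \<Rightarrow> real) \<Rightarrow> (int \<Rightarrow> int \<Rightarrow> real)
    \<Rightarrow> (int \<Rightarrow> int \<Rightarrow> int \<Rightarrow> real) \<Rightarrow> (int \<times> int \<Rightarrow> real) \<Rightarrow> int \<Rightarrow> int \<Rightarrow> real" where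
  "G_fn K M \<alpha> \<beta> \<gamma> lam u k j =
      \<alpha> (k mod K) * w_fn K M u k j
    + (\<Sum>l\<in>{1..<K}. \<beta> (k mod K) l * b_fn K M u l k j)
    + (\<Sum>l\<in>{1..<K}. \<gamma> (k mod K) l * r_fn K M u l k j)
    + (\<Sum>l\<in>{1..<K}. \<Sum>l'\<in>{1..<K} - {l}.
         lam (k mod K) ((k - l) mod K) ((k - l') mod K) * p_fn K M u l l' k j)"

definition B_fn where
  "B_fn K M \<alpha> \<beta> \<gamma> lam u k j = G_fn K M \<alpha> \<beta> \<gamma> lam u k j - G_fn K M \<alpha> \<beta> \<gamma> lam u k (j-1)"

definition cond_C1 :: "int \<Rightarrow> (int \<Rightarrow> int \<Rightarrow> real) \<Rightarrow> (int \<Rightarrow> int \<Rightarrow> real) \<Rightarrow> bool" where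
  "cond_C1 K \<beta> \<gamma> \<longleftrightarrow> (\<forall>k\<in>{0..<K}. \<forall>a\<in>{1..<K}. \<beta> k a = 2 * \<gamma> ((k + a) mod K) a)"

definition cond_C2 :: "int \<Rightarrow> (int \<Rightarrow> int \<Rightarrow> int \<Rightarrow> real) \<Rightarrow> bool" where
  "cond_C2 K lam \<longleftrightarrow> (\<forall>k\<in>{0..<K}. \<forall>a\<in>{1..<K}. \<forall>a'\<in>{1..<K}. a \<noteq> a' \<longrightarrow>
      lam k ((k - a) mod K) ((k - a') mod K) = lam k ((k - a') mod K) ((k - a) mod K) \<and>
      lam k ((k - a') mod K) ((k - a) mod K) = lam ((k - a) mod K) k ((k - a') mod K))"

text \<open>Generator with drift coefficient c: L = gen eps, L^* = gen (-eps).
  (d_{k,j+1} - d_{k,j})^2 expanded as a second-order operator.\<close>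
definition gen :: "int \<Rightarrow> int \<Rightarrow> (int \<Rightarrow> real) \<Rightarrow> (int \<Rightarrow> int \<Rightarrow> real) \<Rightarrow> (int \<Rightarrow> int \<Rightarrow> real)
    \<Rightarrow> (int \<Rightarrow> int \<Rightarrow> int \<Rightarrow> real) \<Rightarrow> real \<Rightarrow> ((int \<times> int \<Rightarrow> real) \<Rightarrow> real)
    \<Rightarrow> (int \<times> int \<Rightarrow> real) \<Rightarrow> real" where
  "gen K M \<alpha> \<beta> \<gamma> lam c f u = (\<Sum>k\<in>{0..<K}. \<Sum>j\<in>{0..<M}.
      (1/2) * (pd K M k (j+1) (pd K M k (j+1) f) u - pd K M k (j+1) (pd K M k j f) u
               - pd K M k j (pd K M k (j+1) f) u + pd K M k j (pd K M k j f) u)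
    - (1/2) * (U K M u k (j+1) - U K M u k j) * (pd K M k (j+1) f u - pd K M k j f u)
    + c * B_fn K M \<alpha> \<beta> \<gamma> lam u k j * pd K M k j f u)"

end

theory Submission
  imports Defs "HOL-Real_Asymp.Real_Asymp"
begin


lemma space_N: "space (density lborel std_normal_density) = UNIV" by simp

lemma space_mu: "space (mu K M) = cfg K M"
  by (simp add: mu_def cfg_def space_PiM)

lemma sets_N: "sets (density lborel std_normal_density) = sets borel" by simp

lemma meas_cont:
  assumes "continuous_on (cfg K M) F"
  shows "F \<in> borel_measurable (mu K M)"
proof -
  define e where "e = (\<lambda>u::int\<times>int\<Rightarrow>real. \<lambda>i. if i \<in> idx K M then u i else 0)"
  have em: "e \<in> borel_measurable (mu K M)"
    unfolding e_def
  proof (rule measurable_coordinatewise_then_product)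
    fix i
    show "(\<lambda>x. if i \<in> idx K M then x i else 0) \<in> borel_measurable (mu K M)"
    proof (cases "i \<in> idx K M")
      case True
      then show ?thesis unfolding mu_def
        by (simp add: measurable_component_singleton[OF True, of "\<lambda>_. density lborel std_normal_density", simplified])
    qed simp
  qed
  define R where "R = (\<lambda>v::int\<times>int\<Rightarrow>real. restrict v (idx K M))"
  have Rc: "continuous_on UNIV R"
    unfolding R_def
  proof (intro continuous_on_coordinatewise_then_product)
    fix i
    show "continuous_on UNIV (\<lambda>x::int\<times>int\<Rightarrow>real. restrict x (idx K M) i)"
      by (cases "i \<in> idx K M") auto
  qed
  have RS: "R ` UNIV \<subseteq> cfg K M" by (auto simp: R_def cfg_def)
  have "continuous_on UNIV (F \<circ> R)"
    using continuous_on_compose[OF Rc continuous_on_subset[OF assms RS]] .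
  then have "(F \<circ> R) \<in> borel_measurable borel" by (rule borel_measurable_continuous_onI)
  then have "(F \<circ> R) \<circ> e \<in> borel_measurable (mu K M)" using em by (simp add: measurable_comp)
  moreover have "\<And>u. u \<in> space (mu K M) \<Longrightarrow> ((F \<circ> R) \<circ> e) u = F u"
  proof -
    fix u assume "u \<in> space (mu K M)"
    then have "u \<in> cfg K M" by (simp add: space_mu)
    then have "restrict (e u) (idx K M) = u"
      by (auto simp: e_def cfg_def restrict_def PiE_def extensional_def)
    then show "((F \<circ> R) \<circ> e) u = F u" by (simp add: R_def)
  qed
  ultimately show ?thesis by (rule measurable_cong[THEN iffD1, rotated]) simp
qed


abbreviation "Nm \<equiv> density lborel std_normal_density"

lemma pow_exp_bound:
  fixes z :: real assumes "z \<ge> 0"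
  shows "(1+z)^N \<le> (16 * (real N + 1))^N * exp (z/16)"
proof -
  define c where "c = 16 * (real N + 1)"
  have c1: "c \<ge> 1" by (simp add: c_def)
  have "1 + z \<le> c * (1 + z/c)" using c1 assms by (simp add: field_simps)
  then have "(1+z)^N \<le> (c * (1 + z/c))^N" by (intro power_mono) (use assms in auto)
  also have "\<dots> = c^N * (1 + z/c)^N" by (simp add: power_mult_distrib)
  also have "(1 + z/c)^N \<le> exp (z/c)^N"
    by (intro power_mono) (use assms c1 in auto)
  also have "exp (z/c)^N = exp (real N * z / c)" by (simp add: exp_of_nat_mult[symmetric])
  also have "\<dots> \<le> exp (z/16)"
  proof -
    have "real N * z / c \<le> z / 16" using assms c1 unfolding c_def
      by (simp add: field_simps mult_right_mono)
    then show ?thesis by simp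
  qed
  finally show ?thesis using c1 unfolding c_def by (simp add: mult_left_mono)
qed

lemma nd2: "std_normal_density x * exp (x\<^sup>2/16) \<le> 2 * normal_density 0 2 x"
proof -
  have a: "exp (- x\<^sup>2 / 2) * exp (x\<^sup>2/16) \<le> exp (- (x\<^sup>2 / 8))"
    by (simp add: exp_add[symmetric])
  have e: "2 * pi * 2\<^sup>2 = 2\<^sup>2 * (2*pi)" by simp
  have "sqrt (2 * pi * 2\<^sup>2) = 2 * sqrt (2*pi)" unfolding e real_sqrt_mult by simp
  then have "2 * normal_density 0 2 x = 1 / sqrt (2 * pi) * exp (- (x\<^sup>2 / 8))"
    by (simp add: normal_density_def power2_eq_square)
  moreover have "std_normal_density x * exp (x\<^sup>2/16) = 1 / sqrt (2 * pi) * (exp (- x\<^sup>2 / 2) * exp (x\<^sup>2/16))"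
    by (simp add: std_normal_density_def)
  ultimately show ?thesis using a by (simp add: divide_right_mono)
qed

lemma int_N_exp: "integrable Nm (\<lambda>x. exp (x\<^sup>2/16))"
proof -
  have "integrable lborel (\<lambda>x. std_normal_density x *\<^sub>R exp (x\<^sup>2/16))"
  proof (rule Bochner_Integration.integrable_bound)
    show "integrable lborel (\<lambda>x. 2 * normal_density 0 2 x)" by simp
    show "AE x in lborel. norm (std_normal_density x *\<^sub>R exp (x\<^sup>2/16)) \<le> norm (2 * normal_density 0 2 x)"
      using nd2 by (simp add: abs_mult)
  qed measurable
  then show ?thesis by (subst integrable_density) auto
qed

lemma psf: "product_sigma_finite (\<lambda>_::int\<times>int. Nm)"
proof -
  interpret prob_space Nm by (rule prob_space_normal_density) simp
  show ?thesis unfolding product_sigma_finite_def by (simp add: sigma_finite_measure_axioms)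
qed

lemma finite_idx[simp]: "finite (idx K M)" by (simp add: idx_def)

lemma int_pg:
  assumes "continuous_on (cfg K M) F" "poly_growth K M F"
  shows "integrable (mu K M) F"
proof -
  interpret product_sigma_finite "\<lambda>_::int\<times>int. Nm" by (rule psf)
  obtain C N where CN: "\<forall>u\<in>cfg K M. \<bar>F u\<bar> \<le> C * (1 + (\<Sum>i\<in>idx K M. (u i)\<^sup>2)) ^ N"
    using assms(2) unfolding poly_growth_def by blast
  define A where "A = (16 * (real N + 1))^N"
  have A0: "A \<ge> 0" by (simp add: A_def)
  have "integrable (mu K M) (\<lambda>x. \<Prod>i\<in>idx K M. exp ((x i)\<^sup>2/16))"
    unfolding mu_def by (rule product_integrable_prod) (auto intro: int_N_exp)
  then have I: "integrable (mu K M) (\<lambda>x. \<bar>C\<bar> * A * (\<Prod>i\<in>idx K M. exp ((x i)\<^sup>2/16)))"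
    by simp
  show ?thesis
  proof (rule Bochner_Integration.integrable_bound[OF I])
    show "F \<in> borel_measurable (mu K M)" by (rule meas_cont[OF assms(1)])
    show "AE x in mu K M. norm (F x) \<le> norm (\<bar>C\<bar> * A * (\<Prod>i\<in>idx K M. exp ((x i)\<^sup>2/16)))"
    proof (rule AE_I2)
      fix u assume "u \<in> space (mu K M)"
      then have u: "u \<in> cfg K M" by (simp add: space_mu)
      define s where "s = (\<Sum>i\<in>idx K M. (u i)\<^sup>2)"
      have s0: "s \<ge> 0" unfolding s_def by (simp add: sum_nonneg)
      have "\<bar>F u\<bar> \<le> C * (1+s)^N" using CN u s_def by auto
      also have "\<dots> \<le> \<bar>C\<bar> * (1+s)^N" using s0 by (intro mult_right_mono) auto
      also have "\<dots> \<le> \<bar>C\<bar> * (A * exp (s/16))"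
        using pow_exp_bound[OF s0, of N] unfolding A_def by (intro mult_left_mono) auto
      also have "exp (s/16) = (\<Prod>i\<in>idx K M. exp ((u i)\<^sup>2/16))"
        unfolding s_def by (simp add: exp_sum[symmetric] sum_divide_distrib)
      finally show "norm (F u) \<le> norm (\<bar>C\<bar> * A * (\<Prod>i\<in>idx K M. exp ((u i)\<^sup>2/16)))"
        using A0 by (simp add: abs_mult prod_nonneg mult.assoc)
    qed
  qed
qed


lemma phi_eq: "std_normal_density y = 1 / sqrt (2*pi) * exp (- y\<^sup>2/2)"
  by (simp add: std_normal_density_def)

lemma phi_deriv: "(std_normal_density has_real_derivative (- y * std_normal_density y)) (at y)"
proof -
  have "((\<lambda>y. exp (- y\<^sup>2/2)) has_real_derivative (- y * exp(-y\<^sup>2/2))) (at y)"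
    by (auto intro!: derivative_eq_intros simp: power2_eq_square)
  from DERIV_cmult[OF this, of "1/sqrt(2*pi)"] show ?thesis
    unfolding phi_eq[abs_def] by (simp add: mult_ac)
qed

lemma abs_le_exp: "\<bar>y::real\<bar> \<le> 2 * exp (y\<^sup>2/16)"
proof -
  have "\<bar>y\<bar> \<le> 2 * (1 + y\<^sup>2/16)"
  proof -
    have "0 \<le> (\<bar>y\<bar> - 4)\<^sup>2" by simp
    then show ?thesis by (simp add: power2_eq_square field_simps abs_mult_self_eq)
  qed
  also have "\<dots> \<le> 2 * exp (y\<^sup>2/16)" by (intro mult_left_mono) (use exp_ge_add_one_self[of "y\<^sup>2/16"] in auto)
  finally show ?thesis .
qed

lemma int_bound3:
  fixes P :: "real \<Rightarrow> real"
  assumes "continuous_on UNIV P" "\<And>y. \<bar>P y\<bar> \<le> E * exp (3 * y\<^sup>2/16)"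
  shows "integrable lborel (\<lambda>y. std_normal_density y * P y)"
proof (rule Bochner_Integration.integrable_bound)
  show "integrable lborel (\<lambda>y. 2 * E * normal_density 0 2 y)" by simp
  show "(\<lambda>y. std_normal_density y * P y) \<in> borel_measurable lborel"
  proof -
    have [measurable]: "P \<in> borel_measurable borel" using assms(1) by (rule borel_measurable_continuous_onI)
    show ?thesis by measurable
  qed
  show "AE y in lborel. norm (std_normal_density y * P y) \<le> norm (2 * E * normal_density 0 2 y)"
  proof (rule AE_I2)
    fix y
    have E0: "E \<ge> 0" using assms(2)[of 0] by simp
    have e: "2 * pi * 2\<^sup>2 = 2\<^sup>2 * (2*pi)" by simp
    have "sqrt (2 * pi * 2\<^sup>2) = 2 * sqrt (2*pi)" unfolding e real_sqrt_mult by simp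
    then have nd: "2 * normal_density 0 2 y = 1 / sqrt (2 * pi) * exp (- (y\<^sup>2 / 8))"
      by (simp add: normal_density_def power2_eq_square)
    have "\<bar>std_normal_density y * P y\<bar> = std_normal_density y * \<bar>P y\<bar>" by (simp add: abs_mult)
    also have "\<dots> \<le> std_normal_density y * (E * exp (3 * y\<^sup>2/16))"
      by (intro mult_left_mono assms(2)) simp
    also have "\<dots> = E * (1 / sqrt (2*pi) * (exp (- y\<^sup>2/2) * exp (3 * y\<^sup>2/16)))"
      by (simp add: phi_eq)
    also have "exp (- y\<^sup>2/2) * exp (3 * y\<^sup>2/16) \<le> exp (- (y\<^sup>2 / 8))"
      by (simp add: exp_add[symmetric])
    finally have "\<bar>std_normal_density y * P y\<bar> \<le> E * (1 / sqrt (2 * pi) * exp (- (y\<^sup>2 / 8)))"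
      using E0 by (simp add: mult_left_mono divide_right_mono)
    moreover have "2 * E * normal_density 0 2 y = E * (1 / sqrt (2 * pi) * exp (- (y\<^sup>2 / 8)))"
      using nd by (simp add: mult_ac)
    ultimately show "norm (std_normal_density y * P y) \<le> norm (2 * E * normal_density 0 2 y)"
      using E0 by simp
  qed
qed

lemma gauss_ibp_lborel:
  fixes H G H' G' :: "real \<Rightarrow> real" and D :: real
  assumes dH: "\<And>y. (H has_real_derivative H' y) (at y)"
    and dG: "\<And>y. (G has_real_derivative G' y) (at y)"
    and cH': "continuous_on UNIV H'" and cG': "continuous_on UNIV G'"
    and bH: "\<And>y. \<bar>H y\<bar> \<le> D * exp (y\<^sup>2/16)" and bG: "\<And>y. \<bar>G y\<bar> \<le> D * exp (y\<^sup>2/16)"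
    and bH': "\<And>y. \<bar>H' y\<bar> \<le> D * exp (y\<^sup>2/16)" and bG': "\<And>y. \<bar>G' y\<bar> \<le> D * exp (y\<^sup>2/16)"
  shows "integrable lborel (\<lambda>y. std_normal_density y * (H' y * G y))"
    and "integrable lborel (\<lambda>y. std_normal_density y * (H y * G' y))"
    and "integrable lborel (\<lambda>y. std_normal_density y * (y * (H y * G y)))"
    and "(\<integral>y. std_normal_density y * (H' y * G y) \<partial>lborel)
         = (\<integral>y. std_normal_density y * (y * (H y * G y)) \<partial>lborel) - (\<integral>y. std_normal_density y * (H y * G' y) \<partial>lborel)"
proof -
  have D0: "D \<ge> 0" using bH[of 0] by simp
  have cH: "continuous_on UNIV H" using dH
    by (meson DERIV_isCont continuous_at_imp_continuous_on)
  have cG: "continuous_on UNIV G" using dG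
    by (meson DERIV_isCont continuous_at_imp_continuous_on)
  have ee: "exp (y\<^sup>2/16) * exp (y\<^sup>2/16) \<le> exp (3 * y\<^sup>2/16)" for y :: real
    by (simp add: exp_add[symmetric])
  have prod_b: "\<bar>A y * B y\<bar> \<le> D * D * exp (3 * y\<^sup>2/16)"
    if "\<bar>A y\<bar> \<le> D * exp (y\<^sup>2/16)" "\<bar>B y\<bar> \<le> D * exp (y\<^sup>2/16)" for A B :: "real \<Rightarrow> real" and y
  proof -
    have "\<bar>A y * B y\<bar> \<le> (D * exp (y\<^sup>2/16)) * (D * exp (y\<^sup>2/16))"
      unfolding abs_mult by (intro mult_mono that) (auto simp: D0)
    also have "\<dots> = D * D * (exp (y\<^sup>2/16) * exp (y\<^sup>2/16))" by simp
    also have "\<dots> \<le> D * D * exp (3 * y\<^sup>2/16)" using ee D0 by (intro mult_left_mono) auto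
    finally show ?thesis .
  qed
  have b3: "\<bar>y * (H y * G y)\<bar> \<le> 2 * D * D * exp (3 * y\<^sup>2/16)" for y
  proof -
    have "\<bar>y * (H y * G y)\<bar> = \<bar>y\<bar> * (\<bar>H y\<bar> * \<bar>G y\<bar>)" by (simp add: abs_mult)
    also have "\<dots> \<le> (2 * exp (y\<^sup>2/16)) * ((D * exp (y\<^sup>2/16)) * (D * exp (y\<^sup>2/16)))"
      by (intro mult_mono abs_le_exp bH bG) (auto simp: D0 intro!: mult_nonneg_nonneg)
    also have "\<dots> = 2 * D * D * (exp (y\<^sup>2/16) * exp (y\<^sup>2/16) * exp (y\<^sup>2/16))" by simp
    also have "exp (y\<^sup>2/16) * exp (y\<^sup>2/16) * exp (y\<^sup>2/16) = exp (3 * y\<^sup>2/16)"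
      by (simp add: exp_add[symmetric])
    finally show ?thesis by simp
  qed
  show i1: "integrable lborel (\<lambda>y. std_normal_density y * (H' y * G y))"
    by (rule int_bound3[where E="D*D"]) (auto intro!: continuous_intros cH' cG prod_b bH' bG)
  show i2: "integrable lborel (\<lambda>y. std_normal_density y * (H y * G' y))"
    by (rule int_bound3[where E="D*D"]) (auto intro!: continuous_intros cH cG' prod_b bH bG')
  show i3: "integrable lborel (\<lambda>y. std_normal_density y * (y * (H y * G y)))"
    by (rule int_bound3[where E="2*D*D"]) (auto intro!: continuous_intros cH cG b3)
  define F where "F y = H y * G y * std_normal_density y" for y
  define f where "f y = std_normal_density y * (H' y * G y) + std_normal_density y * (H y * G' y)
      - std_normal_density y * (y * (H y * G y))" for y
  have Fd: "(F has_real_derivative f y) (at y)" for y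
    unfolding F_def f_def
    by (auto intro!: derivative_eq_intros dH dG phi_deriv simp: algebra_simps)
  have fc: "continuous_on UNIV f" unfolding f_def std_normal_density_def[abs_def]
    by (auto intro!: continuous_intros cH cG cH' cG')
  have fi: "integrable lborel f" unfolding f_def using i1 i2 i3 by auto
  have Fb: "norm (F y) \<le> D * D * exp (- (y\<^sup>2/8))" for y
  proof -
    have "\<bar>F y\<bar> = \<bar>H y * G y\<bar> * std_normal_density y" by (simp add: F_def abs_mult)
    also have "\<dots> \<le> (D * D * exp (3 * y\<^sup>2/16)) * (1 * exp (- y\<^sup>2/2))"
    proof (intro mult_mono prod_b bH bG)
      have "1 / sqrt (2*pi) \<le> 1" using pi_gt3 by (simp add: field_simps)
      then show "std_normal_density y \<le> 1 * exp (- y\<^sup>2/2)" unfolding phi_eq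
        by (intro mult_right_mono) auto
    qed (use D0 in auto)
    also have "\<dots> = D * D * (exp (3 * y\<^sup>2/16) * exp (- y\<^sup>2/2))" by simp
    also have "exp (3 * y\<^sup>2/16) * exp (- y\<^sup>2/2) \<le> exp (- (y\<^sup>2/8))"
      by (simp add: exp_add[symmetric])
    finally show ?thesis using D0 by (simp add: mult_left_mono)
  qed
  have lim_top: "((\<lambda>y::real. exp (- (y\<^sup>2/8))) \<longlongrightarrow> 0) at_top" by real_asymp
  have lim_bot: "((\<lambda>y::real. exp (- (y\<^sup>2/8))) \<longlongrightarrow> 0) at_bot" by real_asymp
  have FT: "(F \<longlongrightarrow> 0) at_top"
    by (rule Lim_null_comparison[OF always_eventually[OF allI[OF Fb]]])
       (use tendsto_mult_right_zero[OF lim_top, of "D*D"] in simp)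
  have FB: "(F \<longlongrightarrow> 0) at_bot"
    by (rule Lim_null_comparison[OF always_eventually[OF allI[OF Fb]]])
       (use tendsto_mult_right_zero[OF lim_bot, of "D*D"] in simp)
  have "(LBINT x=-\<infinity>..\<infinity>. f x) = 0 - 0"
  proof (rule interval_integral_FTC_integrable)
    show "((F \<circ> real_of_ereal) \<longlongrightarrow> 0) (at_right (-\<infinity>))" using FB by (simp add: ereal_tendsto_simps)
    show "((F \<circ> real_of_ereal) \<longlongrightarrow> 0) (at_left \<infinity>)" using FT by (simp add: ereal_tendsto_simps)
    show "set_integrable lborel (einterval (-\<infinity>) \<infinity>) f" using fi by (simp add: set_integrable_def)
  qed (use Fd fc in \<open>auto simp: has_real_derivative_iff_has_vector_derivative[symmetric] continuous_on_eq_continuous_at\<close>)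
  then have "integral\<^sup>L lborel f = 0"
    by (simp add: interval_lebesgue_integral_def set_lebesgue_integral_def)
  then show "(\<integral>y. std_normal_density y * (H' y * G y) \<partial>lborel)
         = (\<integral>y. std_normal_density y * (y * (H y * G y)) \<partial>lborel) - (\<integral>y. std_normal_density y * (H y * G' y) \<partial>lborel)"
    unfolding f_def[abs_def] using i1 i2 i3 by simp
qed


definition pdi :: "int\<times>int \<Rightarrow> ((int\<times>int\<Rightarrow>real)\<Rightarrow>real) \<Rightarrow> (int\<times>int\<Rightarrow>real) \<Rightarrow> real" where
  "pdi i h u = deriv (\<lambda>t. h (u(i:=t))) (u i)"

lemma pd_pdi: "pd K M k j = pdi (k mod K, j mod M)"
  by (auto simp: pd_def pdi_def fun_eq_iff)

definition C0 :: "int \<Rightarrow> int \<Rightarrow> ((int\<times>int\<Rightarrow>real)\<Rightarrow>real) \<Rightarrow> bool" where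
  "C0 K M h \<longleftrightarrow> continuous_on (cfg K M) h \<and> poly_growth K M h"

definition C1 :: "int \<Rightarrow> int \<Rightarrow> int\<times>int \<Rightarrow> ((int\<times>int\<Rightarrow>real)\<Rightarrow>real) \<Rightarrow> bool" where
  "C1 K M i h \<longleftrightarrow> C0 K M h \<and> (\<forall>u\<in>cfg K M. (\<lambda>t. h (u(i:=t))) differentiable at (u i)) \<and> C0 K M (pdi i h)"

lemma C0_int: "C0 K M h \<Longrightarrow> integrable (mu K M) h"
  unfolding C0_def using int_pg by blast

lemma pg_abs: "poly_growth K M f \<Longrightarrow> \<exists>C N. C \<ge> 0 \<and> (\<forall>u\<in>cfg K M. \<bar>f u\<bar> \<le> C * (1 + (\<Sum>i\<in>idx K M. (u i)\<^sup>2)) ^ N)"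
proof -
  assume "poly_growth K M f"
  then obtain C N where CN: "\<forall>u\<in>cfg K M. \<bar>f u\<bar> \<le> C * (1 + (\<Sum>i\<in>idx K M. (u i)\<^sup>2)) ^ N"
    unfolding poly_growth_def by blast
  have "\<forall>u\<in>cfg K M. \<bar>f u\<bar> \<le> \<bar>C\<bar> * (1 + (\<Sum>i\<in>idx K M. (u i)\<^sup>2)) ^ N"
  proof
    fix u assume "u \<in> cfg K M"
    have "0 \<le> (1 + (\<Sum>i\<in>idx K M. (u i)\<^sup>2)) ^ N" by (simp add: sum_nonneg)
    then have "C * (1 + (\<Sum>i\<in>idx K M. (u i)\<^sup>2)) ^ N \<le> \<bar>C\<bar> * (1 + (\<Sum>i\<in>idx K M. (u i)\<^sup>2)) ^ N"
      by (intro mult_right_mono) auto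
    then show "\<bar>f u\<bar> \<le> \<bar>C\<bar> * (1 + (\<Sum>i\<in>idx K M. (u i)\<^sup>2)) ^ N" using CN \<open>u \<in> cfg K M\<close> by auto
  qed
  then show ?thesis by (intro exI[of _ "\<bar>C\<bar>"] exI[of _ N]) auto
qed

lemma pow_mono_base: "(1::real) \<le> x \<Longrightarrow> N \<le> N' \<Longrightarrow> x^N \<le> x^N'"
  by (rule power_increasing)

lemma pg_add: assumes "poly_growth K M f" "poly_growth K M g"
  shows "poly_growth K M (\<lambda>u. f u + g u)"
proof -
  obtain C1 N1 where 1: "C1 \<ge> 0" "\<forall>u\<in>cfg K M. \<bar>f u\<bar> \<le> C1 * (1 + (\<Sum>i\<in>idx K M. (u i)\<^sup>2)) ^ N1"
    using pg_abs[OF assms(1)] by blast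
  obtain C2 N2 where 2: "C2 \<ge> 0" "\<forall>u\<in>cfg K M. \<bar>g u\<bar> \<le> C2 * (1 + (\<Sum>i\<in>idx K M. (u i)\<^sup>2)) ^ N2"
    using pg_abs[OF assms(2)] by blast
  show ?thesis unfolding poly_growth_def
  proof (intro exI[of _ "C1 + C2"] exI[of _ "N1 + N2"] ballI)
    fix u assume u: "u \<in> cfg K M"
    define s where "s = 1 + (\<Sum>i\<in>idx K M. (u i)\<^sup>2)"
    have s1: "s \<ge> 1" unfolding s_def by (simp add: sum_nonneg)
    have a: "\<bar>f u\<bar> \<le> C1 * s^N1" using 1 u unfolding s_def by blast
    have b: "\<bar>g u\<bar> \<le> C2 * s^N2" using 2 u unfolding s_def by blast
    have "\<bar>f u + g u\<bar> \<le> C1 * s^N1 + C2 * s^N2" using a b abs_triangle_ineq[of "f u" "g u"] by linarith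
    also have "\<dots> \<le> C1 * s^(N1+N2) + C2 * s^(N1+N2)"
      using s1 1 2 by (intro add_mono mult_left_mono power_increasing) auto
    finally show "\<bar>f u + g u\<bar> \<le> (C1 + C2) * (1 + (\<Sum>i\<in>idx K M. (u i)\<^sup>2)) ^ (N1 + N2)"
      unfolding s_def by (simp add: algebra_simps)
  qed
qed

lemma pg_mult: assumes "poly_growth K M f" "poly_growth K M g"
  shows "poly_growth K M (\<lambda>u. f u * g u)"
proof -
  obtain C1 N1 where 1: "C1 \<ge> 0" "\<forall>u\<in>cfg K M. \<bar>f u\<bar> \<le> C1 * (1 + (\<Sum>i\<in>idx K M. (u i)\<^sup>2)) ^ N1"
    using pg_abs[OF assms(1)] by blast
  obtain C2 N2 where 2: "C2 \<ge> 0" "\<forall>u\<in>cfg K M. \<bar>g u\<bar> \<le> C2 * (1 + (\<Sum>i\<in>idx K M. (u i)\<^sup>2)) ^ N2"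
    using pg_abs[OF assms(2)] by blast
  show ?thesis unfolding poly_growth_def
  proof (intro exI[of _ "C1 * C2"] exI[of _ "N1 + N2"] ballI)
    fix u assume u: "u \<in> cfg K M"
    define s where "s = 1 + (\<Sum>i\<in>idx K M. (u i)\<^sup>2)"
    have s1: "s \<ge> 1" unfolding s_def by (simp add: sum_nonneg)
    have "\<bar>f u * g u\<bar> = \<bar>f u\<bar> * \<bar>g u\<bar>" by (simp add: abs_mult)
    also have "\<dots> \<le> (C1 * s^N1) * (C2 * s^N2)" using 1 2 u s1 unfolding s_def
      by (intro mult_mono) auto
    finally show "\<bar>f u * g u\<bar> \<le> (C1 * C2) * (1 + (\<Sum>i\<in>idx K M. (u i)\<^sup>2)) ^ (N1 + N2)"
      unfolding s_def by (simp add: algebra_simps power_add)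
  qed
qed

lemma pg_const: "poly_growth K M (\<lambda>u. c)"
  unfolding poly_growth_def by (intro exI[of _ "\<bar>c\<bar>"] exI[of _ 0]) auto

lemma pg_neg: "poly_growth K M f \<Longrightarrow> poly_growth K M (\<lambda>u. - f u)"
  unfolding poly_growth_def by auto

lemma pg_diff: "poly_growth K M f \<Longrightarrow> poly_growth K M g \<Longrightarrow> poly_growth K M (\<lambda>u. f u - g u)"
  using pg_add[of K M f "\<lambda>u. - g u"] pg_neg by auto

lemma pg_coord: assumes "i \<in> idx K M" shows "poly_growth K M (\<lambda>u. u i)"
  unfolding poly_growth_def
proof (intro exI[of _ 1] exI[of _ 1] ballI)
  fix u :: "int\<times>int\<Rightarrow>real"
  have "\<bar>u i\<bar> \<le> 1 + (u i)\<^sup>2"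
  proof -
    have "0 \<le> (\<bar>u i\<bar> - 1)\<^sup>2" by simp
    then show ?thesis by (simp add: power2_eq_square algebra_simps abs_mult_self_eq) 
  qed
  also have "(u i)\<^sup>2 \<le> (\<Sum>i\<in>idx K M. (u i)\<^sup>2)"
    using assms by (intro member_le_sum) auto
  finally show "\<bar>u i\<bar> \<le> 1 * (1 + (\<Sum>i\<in>idx K M. (u i)\<^sup>2)) ^ 1" by simp
qed

lemma pg_sum: "finite A \<Longrightarrow> (\<And>a. a \<in> A \<Longrightarrow> poly_growth K M (f a)) \<Longrightarrow> poly_growth K M (\<lambda>u. \<Sum>a\<in>A. f a u)"
  by (induction A rule: finite_induct) (auto intro: pg_add pg_const)

lemma C0_add: "C0 K M f \<Longrightarrow> C0 K M g \<Longrightarrow> C0 K M (\<lambda>u. f u + g u)"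
  unfolding C0_def by (auto intro: pg_add continuous_on_add)
lemma C0_diff: "C0 K M f \<Longrightarrow> C0 K M g \<Longrightarrow> C0 K M (\<lambda>u. f u - g u)"
  unfolding C0_def by (auto intro: pg_diff continuous_on_diff)
lemma C0_mult: "C0 K M f \<Longrightarrow> C0 K M g \<Longrightarrow> C0 K M (\<lambda>u. f u * g u)"
  unfolding C0_def by (auto intro: pg_mult continuous_on_mult)
lemma C0_const: "C0 K M (\<lambda>u. c)"
  unfolding C0_def by (auto intro: pg_const)
lemma C0_coord: "i \<in> idx K M \<Longrightarrow> C0 K M (\<lambda>u. u i)"
  unfolding C0_def by (auto intro: pg_coord continuous_on_subset[OF continuous_on_product_coordinates])
lemma C0_sum: "finite A \<Longrightarrow> (\<And>a. a \<in> A \<Longrightarrow> C0 K M (f a)) \<Longrightarrow> C0 K M (\<lambda>u. \<Sum>a\<in>A. f a u)"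
  by (induction A rule: finite_induct) (auto intro: C0_add C0_const)

lemma upd_cfg: "i \<in> idx K M \<Longrightarrow> x \<in> PiE (idx K M - {i}) (\<lambda>_. UNIV) \<Longrightarrow> x(i:=y) \<in> cfg K M"
  unfolding cfg_def using PiE_fun_upd[of y "\<lambda>_. UNIV" i x "idx K M - {i}"] by (simp add: insert_absorb)

lemma upd_cfg2: "u \<in> cfg K M \<Longrightarrow> i \<in> idx K M \<Longrightarrow> u(i:=y) \<in> cfg K M"
  unfolding cfg_def using PiE_fun_upd[of y "\<lambda>_. UNIV" i u "idx K M"] by (simp add: insert_absorb)

lemma pg_slice:
  assumes "poly_growth K M h" "i \<in> idx K M" "x \<in> PiE (idx K M - {i}) (\<lambda>_. UNIV)"
  shows "\<exists>D. \<forall>y. \<bar>h (x(i:=y))\<bar> \<le> D * exp (y\<^sup>2/16)"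
proof -
  obtain C N where CN: "C \<ge> 0" "\<forall>u\<in>cfg K M. \<bar>h u\<bar> \<le> C * (1 + (\<Sum>i\<in>idx K M. (u i)\<^sup>2)) ^ N"
    using pg_abs[OF assms(1)] by blast
  define s0 where "s0 = (\<Sum>j\<in>idx K M - {i}. (x j)\<^sup>2)"
  have s00: "s0 \<ge> 0" unfolding s0_def by (simp add: sum_nonneg)
  define A where "A = (16 * (real N + 1))^N"
  show ?thesis
  proof (intro exI[of _ "C * A * exp (s0/16)"] allI)
    fix y
    have "(\<Sum>j\<in>idx K M. ((x(i:=y)) j)\<^sup>2) = y\<^sup>2 + s0"
      unfolding s0_def using assms(2) by (simp add: sum.remove[OF finite_idx assms(2)])
    then have "\<bar>h (x(i:=y))\<bar> \<le> C * (1 + (y\<^sup>2 + s0))^N"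
      using CN(2) upd_cfg[OF assms(2,3)] by metis
    also have "\<dots> \<le> C * (A * exp ((y\<^sup>2 + s0)/16))"
      using pow_exp_bound[of "y\<^sup>2 + s0" N] s00 CN(1) unfolding A_def by (intro mult_left_mono) auto
    also have "exp ((y\<^sup>2 + s0)/16) = exp (s0/16) * exp (y\<^sup>2/16)"
      by (simp add: exp_add[symmetric] add_divide_distrib)
    finally have "\<bar>h (x(i:=y))\<bar> \<le> C * (A * (exp (s0/16) * exp (y\<^sup>2/16)))" .
    then show "\<bar>h (x(i:=y))\<bar> \<le> C * A * exp (s0/16) * exp (y\<^sup>2/16)" by (simp only: mult.assoc)
  qed
qed

lemma cont_slice:
  assumes "continuous_on (cfg K M) h" "i \<in> idx K M" "x \<in> PiE (idx K M - {i}) (\<lambda>_. UNIV)"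
  shows "continuous_on UNIV (\<lambda>y. h (x(i:=y)))"
proof -
  have c: "continuous_on UNIV (\<lambda>y::real. x(i:=y))"
  proof (intro continuous_on_coordinatewise_then_product)
    fix j show "continuous_on UNIV (\<lambda>y::real. (x(i:=y)) j)"
      by (cases "j = i") auto
  qed
  show ?thesis
    by (rule continuous_on_compose2[OF assms(1) c]) (use upd_cfg[OF assms(2,3)] in auto)
qed

lemma deriv_slice:
  assumes "C1 K M i h" "i \<in> idx K M" "x \<in> PiE (idx K M - {i}) (\<lambda>_. UNIV)"
  shows "((\<lambda>y. h (x(i:=y))) has_real_derivative pdi i h (x(i:=y))) (at y)"
proof -
  have "(\<lambda>t. h ((x(i:=y))(i:=t))) differentiable at ((x(i:=y)) i)"
    using assms(1) upd_cfg[OF assms(2,3)] unfolding C1_def by blast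
  then have "(\<lambda>t. h (x(i:=t))) differentiable at y" by simp
  then show ?thesis unfolding pdi_def by (simp add: DERIV_deriv_iff_real_differentiable[symmetric])
qed


lemma C1_C0: "C1 K M i h \<Longrightarrow> C0 K M h" unfolding C1_def by blast
lemma C1_C0': "C1 K M i h \<Longrightarrow> C0 K M (pdi i h)" unfolding C1_def by blast

lemma mu_insert: "i \<in> idx K M \<Longrightarrow> mu K M = PiM (insert i (idx K M - {i})) (\<lambda>_. Nm)"
  unfolding mu_def by (simp add: insert_absorb)

lemma ibp:
  assumes i: "i \<in> idx K M" and h: "C1 K M i h" and g: "C1 K M i g"
  shows "(\<integral>u. pdi i h u * g u \<partial>mu K M) = (\<integral>u. h u * (u i * g u - pdi i g u) \<partial>mu K M)"
proof -
  interpret product_sigma_finite "\<lambda>_::int\<times>int. Nm" by (rule psf)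
  define I' where "I' = idx K M - {i}"
  have fI: "finite I'" "i \<notin> I'" by (auto simp: I'_def)
  have mu: "mu K M = PiM (insert i I') (\<lambda>_. Nm)" unfolding I'_def by (rule mu_insert[OF i])
  note h0 = C1_C0[OF h] and h1 = C1_C0'[OF h] and g0 = C1_C0[OF g] and g1 = C1_C0'[OF g]
  have intL: "integrable (mu K M) (\<lambda>u. pdi i h u * g u)"
    by (intro C0_int C0_mult h1 g0)
  have intR: "integrable (mu K M) (\<lambda>u. h u * (u i * g u - pdi i g u))"
    by (intro C0_int C0_mult C0_diff h0 g1 g0 C0_coord i)
  have L: "(\<integral>u. pdi i h u * g u \<partial>mu K M) = (\<integral>x. (\<integral>y. pdi i h (x(i:=y)) * g (x(i:=y)) \<partial>Nm) \<partial>PiM I' (\<lambda>_. Nm))"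
    using product_integral_insert[OF fI, of "\<lambda>u. pdi i h u * g u"] intL mu by simp
  have R: "(\<integral>u. h u * (u i * g u - pdi i g u) \<partial>mu K M) = (\<integral>x. (\<integral>y. h (x(i:=y)) * (y * g (x(i:=y)) - pdi i g (x(i:=y))) \<partial>Nm) \<partial>PiM I' (\<lambda>_. Nm))"
    using product_integral_insert[OF fI, of "\<lambda>u. h u * (u i * g u - pdi i g u)"] intR mu by simp
  have inner: "(\<integral>y. pdi i h (x(i:=y)) * g (x(i:=y)) \<partial>Nm) = (\<integral>y. h (x(i:=y)) * (y * g (x(i:=y)) - pdi i g (x(i:=y))) \<partial>Nm)"
    if x: "x \<in> space (PiM I' (\<lambda>_. Nm))" for x
  proof -
    have x': "x \<in> PiE (idx K M - {i}) (\<lambda>_. UNIV)" using x by (simp add: space_PiM I'_def)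
    define H where "H y = h (x(i:=y))" for y
    define G where "G y = g (x(i:=y))" for y
    define H' where "H' y = pdi i h (x(i:=y))" for y
    define G' where "G' y = pdi i g (x(i:=y))" for y
    have dH: "(H has_real_derivative H' y) (at y)" for y
      unfolding H_def[abs_def] H'_def using deriv_slice[OF h i x'] .
    have dG: "(G has_real_derivative G' y) (at y)" for y
      unfolding G_def[abs_def] G'_def using deriv_slice[OF g i x'] .
    have cH: "continuous_on UNIV H" unfolding H_def
      using cont_slice[OF _ i x'] C1_C0[OF h] unfolding C0_def by blast
    have cG: "continuous_on UNIV G" unfolding G_def
      using cont_slice[OF _ i x'] C1_C0[OF g] unfolding C0_def by blast
    have cH': "continuous_on UNIV H'" unfolding H'_def
      using cont_slice[OF _ i x'] C1_C0'[OF h] unfolding C0_def by blast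
    have cG': "continuous_on UNIV G'" unfolding G'_def
      using cont_slice[OF _ i x'] C1_C0'[OF g] unfolding C0_def by blast
    obtain D1 where D1: "\<And>y. \<bar>H y\<bar> \<le> D1 * exp (y\<^sup>2/16)" unfolding H_def
      using pg_slice[OF _ i x'] C1_C0[OF h] unfolding C0_def by blast
    obtain D2 where D2: "\<And>y. \<bar>G y\<bar> \<le> D2 * exp (y\<^sup>2/16)" unfolding G_def
      using pg_slice[OF _ i x'] C1_C0[OF g] unfolding C0_def by blast
    obtain D3 where D3: "\<And>y. \<bar>H' y\<bar> \<le> D3 * exp (y\<^sup>2/16)" unfolding H'_def
      using pg_slice[OF _ i x'] C1_C0'[OF h] unfolding C0_def by blast
    obtain D4 where D4: "\<And>y. \<bar>G' y\<bar> \<le> D4 * exp (y\<^sup>2/16)" unfolding G'_def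
      using pg_slice[OF _ i x'] C1_C0'[OF g] unfolding C0_def by blast
    define D where "D = \<bar>D1\<bar> + \<bar>D2\<bar> + \<bar>D3\<bar> + \<bar>D4\<bar>"
    have Db: "\<bar>P y\<bar> \<le> D * exp (y\<^sup>2/16)" if "\<bar>P y\<bar> \<le> Dk * exp (y\<^sup>2/16)" "\<bar>Dk\<bar> \<le> D" for P :: "real \<Rightarrow> real" and y Dk
    proof -
      have "Dk * exp (y\<^sup>2/16) \<le> D * exp (y\<^sup>2/16)" using that(2) by (intro mult_right_mono) auto
      then show ?thesis using that(1) by linarith
    qed
    have bH: "\<And>y. \<bar>H y\<bar> \<le> D * exp (y\<^sup>2/16)" by (rule Db[OF D1]) (simp add: D_def)
    have bG: "\<And>y. \<bar>G y\<bar> \<le> D * exp (y\<^sup>2/16)" by (rule Db[OF D2]) (simp add: D_def)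
    have bH': "\<And>y. \<bar>H' y\<bar> \<le> D * exp (y\<^sup>2/16)" by (rule Db[OF D3]) (simp add: D_def)
    have bG': "\<And>y. \<bar>G' y\<bar> \<le> D * exp (y\<^sup>2/16)" by (rule Db[OF D4]) (simp add: D_def)
    note gi = gauss_ibp_lborel[OF dH dG cH' cG' bH bG bH' bG']
    have m1: "(\<lambda>y. H' y * G y) \<in> borel_measurable borel"
      by (intro borel_measurable_continuous_onI continuous_intros cH' cG)
    have m2: "(\<lambda>y. H y * (y * G y - G' y)) \<in> borel_measurable borel"
      by (intro borel_measurable_continuous_onI continuous_intros cH cG cG')
    have "(\<integral>y. H' y * G y \<partial>Nm) = (\<integral>y. std_normal_density y * (H' y * G y) \<partial>lborel)"
      using m1 by (subst integral_density) auto
    also have "\<dots> = (\<integral>y. std_normal_density y * (y * (H y * G y)) \<partial>lborel) - (\<integral>y. std_normal_density y * (H y * G' y) \<partial>lborel)"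
      by (rule gi(4))
    also have "\<dots> = (\<integral>y. std_normal_density y * (y * (H y * G y)) - std_normal_density y * (H y * G' y) \<partial>lborel)"
      using gi(2,3) by simp
    also have "\<dots> = (\<integral>y. std_normal_density y * (H y * (y * G y - G' y)) \<partial>lborel)"
      by (rule Bochner_Integration.integral_cong) (auto simp: algebra_simps)
    also have "\<dots> = (\<integral>y. H y * (y * G y - G' y) \<partial>Nm)"
      using m2 by (subst integral_density) auto
    finally show ?thesis unfolding H_def G_def H'_def G'_def .
  qed
  show ?thesis unfolding L R
    by (rule Bochner_Integration.integral_cong[OF refl inner])
qed


lemma U_congK: "a mod K = a' mod K \<Longrightarrow> U K M u a b = U K M u a' b" by (simp add: U_def)
lemma U_perM: "U K M u a (b + M) = U K M u a b" by (simp add: U_def)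
lemma U_perM1: "U K M u a (b + M + 1) = U K M u a (b + 1)"
proof -
  have "(b + M + 1) mod M = (b + 1) mod M" by (metis add.commute add.left_commute mod_add_self2)
  then show ?thesis by (simp add: U_def)
qed

lemma tele:
  fixes F :: "int \<Rightarrow> real"
  assumes "M \<ge> 1" "\<And>j. F (j + M) = F j"
  shows "(\<Sum>j\<in>{0..<M}. F (j+1)) = (\<Sum>j\<in>{0..<M}. F j)"
proof -
  have "(\<Sum>j\<in>{0..<M}. F (j+1)) = (\<Sum>j\<in>{1..<M+1}. F j)"
    by (rule sum.reindex_bij_witness[of _ "\<lambda>j. j - 1" "\<lambda>j. j + 1"]) auto
  also have "\<dots> = (\<Sum>j\<in>insert M {1..<M}. F j)" using assms(1)
    by (intro sum.cong) auto
  also have "\<dots> = F M + (\<Sum>j\<in>{1..<M}. F j)" by simp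
  also have "F M = F 0" using assms(2)[of 0] by simp
  also have "F 0 + (\<Sum>j\<in>{1..<M}. F j) = (\<Sum>j\<in>insert 0 {1..<M}. F j)" by simp
  also have "\<dots> = (\<Sum>j\<in>{0..<M}. F j)" using assms(1) by (intro sum.cong) auto
  finally show ?thesis .
qed

lemma tele0:
  fixes F :: "int \<Rightarrow> real"
  assumes "M \<ge> 1" "\<And>j. F (j + M) = F j"
  shows "(\<Sum>j\<in>{0..<M}. F j - F (j+1)) = 0"
  using tele[of M F, OF assms] by (simp add: sum_subtractf)

lemma sum_mod_shift:
  fixes F :: "int \<Rightarrow> real"
  assumes "K \<ge> 1"
  shows "(\<Sum>k\<in>{0..<K}. F ((k + l) mod K)) = (\<Sum>k\<in>{0..<K}. F k)"
  by (rule sum.reindex_bij_witness[of _ "\<lambda>k. (k - l) mod K" "\<lambda>k. (k + l) mod K"])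
     (use assms in \<open>auto simp: mod_simps\<close>)

lemma G_perM: "G_fn K M \<alpha> \<beta> \<gamma> lam u k (j + M) = G_fn K M \<alpha> \<beta> \<gamma> lam u k j"
  by (simp add: G_fn_def w_fn_def b_fn_def r_fn_def p_fn_def U_perM U_perM1)

lemma E1:
  assumes "M \<ge> 1"
  shows "(\<Sum>j\<in>{0..<M}. U K M u k j * (G_fn K M \<alpha> \<beta> \<gamma> lam u k j - G_fn K M \<alpha> \<beta> \<gamma> lam u k (j - 1)))
       = (\<Sum>j\<in>{0..<M}. (U K M u k j - U K M u k (j+1)) * G_fn K M \<alpha> \<beta> \<gamma> lam u k j)"
proof -
  define F where "F j = U K M u k j * G_fn K M \<alpha> \<beta> \<gamma> lam u k (j - 1)" for j
  have per: "F (j + M) = F j" for j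
  proof -
    have "j + M - 1 = (j - 1) + M" by simp
    then show ?thesis unfolding F_def by (simp only: U_perM G_perM)
  qed
  have "(\<Sum>j\<in>{0..<M}. F (j+1)) = (\<Sum>j\<in>{0..<M}. F j)" by (rule tele[of M F, OF assms per])
  then have "(\<Sum>j\<in>{0..<M}. U K M u k (j+1) * G_fn K M \<alpha> \<beta> \<gamma> lam u k j)
           = (\<Sum>j\<in>{0..<M}. U K M u k j * G_fn K M \<alpha> \<beta> \<gamma> lam u k (j - 1))"
    unfolding F_def by simp
  then show ?thesis by (simp add: algebra_simps sum_subtractf)
qed

lemma Ealpha:
  assumes "M \<ge> 1"
  shows "(\<Sum>j\<in>{0..<M}. (U K M u k j - U K M u k (j+1)) * (a * w_fn K M u k j)) = 0"
proof -
  define F where "F j = a / 3 * U K M u k j ^ 3" for j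
  have "(\<Sum>j\<in>{0..<M}. (U K M u k j - U K M u k (j+1)) * (a * w_fn K M u k j))
      = (\<Sum>j\<in>{0..<M}. F j - F (j+1))"
    unfolding F_def w_fn_def by (intro sum.cong) (auto simp: power2_eq_square power3_eq_cube field_simps)
  also have "\<dots> = 0" by (rule tele0[OF assms]) (simp add: F_def U_perM)
  finally show ?thesis .
qed

definition Y :: "int \<Rightarrow> int \<Rightarrow> (int\<times>int\<Rightarrow>real) \<Rightarrow> int \<Rightarrow> int \<Rightarrow> real" where
  "Y K M u a c = (\<Sum>j\<in>{0..<M}. U K M u a j * U K M u a (j+1) * (U K M u c (j+1) - U K M u c j))"

lemma Y_cong: "a mod K = a' mod K \<Longrightarrow> c mod K = c' mod K \<Longrightarrow> Y K M u a c = Y K M u a' c'"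
  unfolding Y_def by (simp add: U_def)

lemma Ebeta:
  assumes "M \<ge> 1"
  shows "(\<Sum>j\<in>{0..<M}. (U K M u k j - U K M u k (j+1)) * b_fn K M u l k j) = Y K M u k (k+l) / 2"
proof -
  define F where "F j = U K M u k j ^ 2 * U K M u (k+l) j / 2" for j
  have "(\<Sum>j\<in>{0..<M}. (U K M u k j - U K M u k (j+1)) * b_fn K M u l k j)
      = (\<Sum>j\<in>{0..<M}. (F j - F (j+1)) + U K M u k j * U K M u k (j+1) * (U K M u (k+l) (j+1) - U K M u (k+l) j) / 2)"
    unfolding F_def b_fn_def by (intro sum.cong) (auto simp: power2_eq_square field_simps)
  also have "\<dots> = (\<Sum>j\<in>{0..<M}. F j - F (j+1)) + Y K M u k (k+l) / 2"
    unfolding Y_def by (simp add: sum.distrib sum_divide_distrib)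
  also have "(\<Sum>j\<in>{0..<M}. F j - F (j+1)) = 0" by (rule tele0[OF assms]) (simp add: F_def U_perM)
  finally show ?thesis by simp
qed

lemma Egamma:
  shows "(\<Sum>j\<in>{0..<M}. (U K M u k j - U K M u k (j+1)) * r_fn K M u l k j) = - Y K M u (k-l) k"
  unfolding Y_def r_fn_def by (simp add: sum_negf[symmetric] algebra_simps)


definition P2 :: "int \<Rightarrow> int \<Rightarrow> (int\<times>int\<Rightarrow>real) \<Rightarrow> int \<Rightarrow> int \<Rightarrow> int \<Rightarrow> real" where
  "P2 K M u a b j = (1/6) * (2 * U K M u a j * U K M u b j
      + U K M u a j * U K M u b (j+1) + U K M u a (j+1) * U K M u b j
      + 2 * U K M u a (j+1) * U K M u b (j+1))"

lemma p_P2: "p_fn K M u l l' k j = P2 K M u (k-l) (k-l') j"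
  by (simp add: p_fn_def P2_def)

definition S3 :: "int \<Rightarrow> int \<Rightarrow> (int\<times>int\<Rightarrow>real) \<Rightarrow> int \<Rightarrow> int \<Rightarrow> int \<Rightarrow> real" where
  "S3 K M u c a b = (\<Sum>j\<in>{0..<M}. (U K M u c j - U K M u c (j+1)) * P2 K M u a b j)"

lemma S3_cong: "c mod K = c' mod K \<Longrightarrow> a mod K = a' mod K \<Longrightarrow> b mod K = b' mod K \<Longrightarrow>
   S3 K M u c a b = S3 K M u c' a' b'"
  unfolding S3_def P2_def by (simp add: U_def)

lemma S3_cyc: assumes "M \<ge> 1"
  shows "S3 K M u c a b + S3 K M u a b c + S3 K M u b c a = 0"
proof -
  define T where "T j = U K M u a j * U K M u b j * U K M u c j" for j
  have "S3 K M u c a b + S3 K M u a b c + S3 K M u b c a = (\<Sum>j\<in>{0..<M}. T j - T (j+1))"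
    unfolding S3_def sum.distrib[symmetric]
    by (intro sum.cong) (auto simp: T_def P2_def field_simps)
  also have "\<dots> = 0" by (rule tele0[OF assms]) (simp add: T_def U_perM)
  finally show ?thesis .
qed

lemma swap2: fixes d :: "int \<Rightarrow> real" shows "(\<Sum>j\<in>A. d j * (\<Sum>l\<in>B. c l * e l j)) = (\<Sum>l\<in>B. c l * (\<Sum>j\<in>A. d j * e l j))"
proof -
  have "(\<Sum>j\<in>A. d j * (\<Sum>l\<in>B. c l * e l j)) = (\<Sum>j\<in>A. \<Sum>l\<in>B. c l * (d j * e l j))"
    by (simp add: sum_distrib_left mult_ac)
  also have "\<dots> = (\<Sum>l\<in>B. \<Sum>j\<in>A. c l * (d j * e l j))" by (rule sum.swap)
  also have "\<dots> = (\<Sum>l\<in>B. c l * (\<Sum>j\<in>A. d j * e l j))" by (simp add: sum_distrib_left)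
  finally show ?thesis .
qed

lemma swap3: fixes d :: "int \<Rightarrow> real" shows "(\<Sum>j\<in>A. d j * (\<Sum>l\<in>B. \<Sum>l'\<in>C l. c l l' * e l l' j)) = (\<Sum>l\<in>B. \<Sum>l'\<in>C l. c l l' * (\<Sum>j\<in>A. d j * e l l' j))"
proof -
  have "(\<Sum>j\<in>A. d j * (\<Sum>l\<in>B. \<Sum>l'\<in>C l. c l l' * e l l' j)) = (\<Sum>j\<in>A. \<Sum>l\<in>B. \<Sum>l'\<in>C l. c l l' * (d j * e l l' j))"
    by (simp add: sum_distrib_left mult_ac)
  also have "\<dots> = (\<Sum>l\<in>B. \<Sum>j\<in>A. \<Sum>l'\<in>C l. c l l' * (d j * e l l' j))" by (rule sum.swap)
  also have "\<dots> = (\<Sum>l\<in>B. \<Sum>l'\<in>C l. \<Sum>j\<in>A. c l l' * (d j * e l l' j))" by (simp add: sum.swap[of _ A])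
  also have "\<dots> = (\<Sum>l\<in>B. \<Sum>l'\<in>C l. c l l' * (\<Sum>j\<in>A. d j * e l l' j))" by (simp add: sum_distrib_left)
  finally show ?thesis .
qed

lemma Ek:
  assumes M1: "M \<ge> 1" and k: "0 \<le> k" "k < K"
  shows "(\<Sum>j\<in>{0..<M}. (U K M u k j - U K M u k (j+1)) * G_fn K M \<alpha> \<beta> \<gamma> lam u k j)
    = (\<Sum>l\<in>{1..<K}. \<beta> k l * (Y K M u k (k+l) / 2)) - (\<Sum>l\<in>{1..<K}. \<gamma> k l * Y K M u (k-l) k)
      + (\<Sum>l\<in>{1..<K}. \<Sum>l'\<in>{1..<K} - {l}. lam k ((k - l) mod K) ((k - l') mod K) * S3 K M u k (k-l) (k-l'))"
proof -
  have km: "k mod K = k" using k by simp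
  define d where "d j = U K M u k j - U K M u k (j+1)" for j
  have "(\<Sum>j\<in>{0..<M}. d j * G_fn K M \<alpha> \<beta> \<gamma> lam u k j)
     = (\<Sum>j\<in>{0..<M}. d j * (\<alpha> k * w_fn K M u k j))
       + (\<Sum>j\<in>{0..<M}. d j * (\<Sum>l\<in>{1..<K}. \<beta> k l * b_fn K M u l k j))
       + (\<Sum>j\<in>{0..<M}. d j * (\<Sum>l\<in>{1..<K}. \<gamma> k l * r_fn K M u l k j))
       + (\<Sum>j\<in>{0..<M}. d j * (\<Sum>l\<in>{1..<K}. \<Sum>l'\<in>{1..<K} - {l}. lam k ((k - l) mod K) ((k - l') mod K) * p_fn K M u l l' k j))"
    unfolding G_fn_def km by (simp add: distrib_left sum.distrib)
  also have "(\<Sum>j\<in>{0..<M}. d j * (\<alpha> k * w_fn K M u k j)) = 0"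
    unfolding d_def by (rule Ealpha[OF M1])
  also have "(\<Sum>j\<in>{0..<M}. d j * (\<Sum>l\<in>{1..<K}. \<beta> k l * b_fn K M u l k j))
      = (\<Sum>l\<in>{1..<K}. \<beta> k l * (Y K M u k (k+l) / 2))"
    unfolding swap2 d_def Ebeta[OF M1] ..
  also have "(\<Sum>j\<in>{0..<M}. d j * (\<Sum>l\<in>{1..<K}. \<gamma> k l * r_fn K M u l k j))
      = - (\<Sum>l\<in>{1..<K}. \<gamma> k l * Y K M u (k-l) k)"
    unfolding swap2 d_def Egamma by (simp add: sum_negf)
  also have "(\<Sum>j\<in>{0..<M}. d j * (\<Sum>l\<in>{1..<K}. \<Sum>l'\<in>{1..<K} - {l}. lam k ((k - l) mod K) ((k - l') mod K) * p_fn K M u l l' k j))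
      = (\<Sum>l\<in>{1..<K}. \<Sum>l'\<in>{1..<K} - {l}. lam k ((k - l) mod K) ((k - l') mod K) * S3 K M u k (k-l) (k-l'))"
    unfolding swap3 d_def S3_def p_P2 ..
  finally show ?thesis unfolding d_def by simp
qed


lemma mod_in: assumes "(x::int) mod K \<noteq> 0" "K \<ge> 1" shows "x mod K \<in> {1..<K}"
proof -
  have "0 \<le> x mod K" "x mod K < K" using assms by simp_all
  then show ?thesis using assms(1) by auto
qed

lemma ndvd_diff: assumes "l \<in> {1..<K}" "l' \<in> {1..<K}" "l \<noteq> (l'::int)" shows "\<not> K dvd (l' - l)"
proof
  assume "K dvd (l' - l)"
  then have "\<bar>K\<bar> \<le> \<bar>l' - l\<bar>" by (rule dvd_imp_le_int[rotated]) (use assms in auto)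
  then show False using assms by auto
qed

lemma ndvd1: assumes "l \<in> {1..<K}" shows "\<not> K dvd (l::int)"
  using zdvd_imp_le[of K l] assms by auto

lemma ndvd1': assumes "l \<in> {1..<K}" shows "\<not> K dvd (- (l::int))"
  using ndvd1[OF assms] by simp

lemma md: "((a::int) mod K - b mod K) mod K = (a - b) mod K" by (rule mod_diff_eq)
lemma md1: "((a::int) mod K - b) mod K = (a - b) mod K" by (rule mod_diff_left_eq)
lemma md2: "((a::int) - b mod K) mod K = (a - b) mod K" by (rule mod_diff_right_eq)


lemma lam_cyc:
  assumes C2: "cond_C2 K lam" and k: "0 \<le> k" "k < K" and l: "l \<in> {1..<K}" "l' \<in> {1..<K}" "l \<noteq> l'"
  shows "lam k ((k - l) mod K) ((k - l') mod K) = lam ((k - l) mod K) ((k - l') mod K) k"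
proof -
  have K1: "K \<ge> 1" using l by auto
  define a where "a = (k - l) mod K"
  define b where "b = (k - l') mod K"
  have c1: "lam k a b = lam k b a \<and> lam k b a = lam a k b"
    using C2[unfolded cond_C2_def, rule_format, of k l l'] k l unfolding a_def b_def by auto
  define m where "m = (a - k) mod K"
  define m' where "m' = (a - b) mod K"
  have mm1: "m = (- l) mod K" unfolding m_def a_def md1 by simp
  have mm2: "m' = (l' - l) mod K" unfolding m'_def a_def b_def md by simp
  have m_in: "m \<in> {1..<K}" unfolding mm1
    by (rule mod_in[OF _ K1]) (use ndvd1'[OF l(1)] mod_0_imp_dvd in blast)
  have m'_in: "m' \<in> {1..<K}" unfolding mm2
    by (rule mod_in[OF _ K1]) (use ndvd_diff[OF l] mod_0_imp_dvd in blast)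
  have mne: "m \<noteq> m'"
  proof
    assume "m = m'"
    then have "(- l) mod K = (l' - l) mod K" unfolding mm1 mm2 .
    then have "K dvd (l' - l - (- l))" by (simp add: mod_eq_dvd_iff)
    then show False using ndvd1[OF l(2)] by simp
  qed
  have a_in: "0 \<le> a" "a < K" unfolding a_def using K1 by auto
  have "lam a ((a - m) mod K) ((a - m') mod K) = lam a ((a - m') mod K) ((a - m) mod K)"
    using C2[unfolded cond_C2_def, rule_format, of a m m'] a_in m_in m'_in mne by auto
  moreover have "(a - m) mod K = k" unfolding m_def md2 using k by simp
  moreover have "(a - m') mod K = b" unfolding m'_def md2 by (simp add: a_def b_def)
  ultimately have "lam a k b = lam a b k" by simp
  with c1 show ?thesis unfolding a_def b_def by simp
qed


definition XX :: "int \<Rightarrow> (int \<times> int \<times> int) set" where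
  "XX K = Sigma {0..<K} (\<lambda>k. Sigma {1..<K} (\<lambda>l. {1..<K} - {l}))"

definition RR :: "int \<Rightarrow> int \<times> int \<times> int \<Rightarrow> int \<times> int \<times> int" where
  "RR K t = (case t of (k, l, l') \<Rightarrow> ((k - l) mod K, (l' - l) mod K, (- l) mod K))"

lemma RR_simp: "RR K (k, l, l') = ((k - l) mod K, (l' - l) mod K, (- l) mod K)"
  by (simp add: RR_def)

lemma RR2: "RR K (RR K (k, l, l')) = ((k - l') mod K, (- l') mod K, (l - l') mod K)"
proof -
  have a1: "k - l - (l' - l) = k - l'" by linarith
  have a2: "- l - (l' - l) = - l'" by linarith
  have a3: "- (l' - l) = l - l'" by linarith
  have e1: "((k - l) mod K - (l' - l) mod K) mod K = (k - l') mod K" unfolding md a1 ..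
  have e2: "((- l) mod K - (l' - l) mod K) mod K = (- l') mod K" unfolding md a2 ..
  have e3: "(- ((l' - l) mod K)) mod K = (l - l') mod K" unfolding mod_minus_eq a3 ..
  show ?thesis unfolding RR_simp e1 e2 e3 ..
qed

lemma XX_iff: "(k, l, l') \<in> XX K \<longleftrightarrow> 0 \<le> k \<and> k < K \<and> l \<in> {1..<K} \<and> l' \<in> {1..<K} \<and> l \<noteq> l'"
  by (auto simp: XX_def)

lemma RR_in: assumes "t \<in> XX K" shows "RR K t \<in> XX K"
proof -
  obtain k l l' where t: "t = (k, l, l')" by (cases t) auto
  have h: "0 \<le> k" "k < K" "l \<in> {1..<K}" "l' \<in> {1..<K}" "l \<noteq> l'" using assms t by (auto simp: XX_iff)
  have K1: "K \<ge> 1" using h by auto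
  have i1: "(l' - l) mod K \<in> {1..<K}"
    by (rule mod_in[OF _ K1]) (use ndvd_diff[OF h(3,4,5)] mod_0_imp_dvd in blast)
  have i2: "(- l) mod K \<in> {1..<K}"
    by (rule mod_in[OF _ K1]) (use ndvd1'[OF h(3)] mod_0_imp_dvd in blast)
  have i3: "(l' - l) mod K \<noteq> (- l) mod K"
  proof
    assume "(l' - l) mod K = (- l) mod K"
    then have "K dvd (l' - l - (- l))" by (simp only: mod_eq_dvd_iff)
    then show False using ndvd1[OF h(4)] by simp
  qed
  have i0: "0 \<le> (k - l) mod K" "(k - l) mod K < K" using K1 by auto
  show ?thesis unfolding t RR_simp XX_iff using i0 i1 i2 i3 by blast
qed

lemma RR3: assumes "t \<in> XX K" shows "RR K (RR K (RR K t)) = t"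
proof -
  obtain k l l' where t: "t = (k, l, l')" by (cases t) auto
  have h: "0 \<le> k" "k < K" "l \<in> {1..<K}" "l' \<in> {1..<K}" using assms t by (auto simp: XX_iff)
  have a1: "k - l' - (- l') = k" by linarith
  have a2: "l - l' - (- l') = l" by linarith
  have f1: "((k - l') mod K - (- l') mod K) mod K = k" unfolding md a1 using h by simp
  have f2: "((l - l') mod K - (- l') mod K) mod K = l" unfolding md a2 using h by simp
  have f3: "(- ((- l') mod K)) mod K = l'" unfolding mod_minus_eq using h by simp
  have "RR K (RR K (RR K t)) = RR K ((k - l') mod K, (- l') mod K, (l - l') mod K)"
    unfolding t RR2 ..
  also have "\<dots> = t" unfolding RR_simp f1 f2 f3 t ..
  finally show ?thesis .
qed

lemma sum_RR: "(\<Sum>t\<in>XX K. F (RR K t)) = (\<Sum>t\<in>XX K. (F t :: real))"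
  by (rule sum.reindex_bij_witness[of _ "\<lambda>t. RR K (RR K t)" "RR K"])
     (auto simp: RR3 RR_in)

definition LL :: "int \<Rightarrow> (int \<Rightarrow> int \<Rightarrow> int \<Rightarrow> real) \<Rightarrow> int \<times> int \<times> int \<Rightarrow> real" where
  "LL K lam t = (case t of (k, l, l') \<Rightarrow> lam k ((k - l) mod K) ((k - l') mod K))"

definition SS :: "int \<Rightarrow> int \<Rightarrow> (int\<times>int\<Rightarrow>real) \<Rightarrow> int \<times> int \<times> int \<Rightarrow> real" where
  "SS K M u t = (case t of (k, l, l') \<Rightarrow> S3 K M u k (k - l) (k - l'))"

lemma LL_RR: assumes "cond_C2 K lam" "t \<in> XX K" shows "LL K lam (RR K t) = LL K lam t"
proof -
  obtain k l l' where t: "t = (k, l, l')" by (cases t) auto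
  have h: "0 \<le> k" "k < K" "l \<in> {1..<K}" "l' \<in> {1..<K}" "l \<noteq> l'" using assms t by (auto simp: XX_iff)
  have a1: "k - l - (l' - l) = k - l'" by linarith
  have a2: "k - l - (- l) = k" by linarith
  have e1: "((k - l) mod K - (l' - l) mod K) mod K = (k - l') mod K" unfolding md a1 ..
  have e2: "((k - l) mod K - (- l) mod K) mod K = k" unfolding md a2 using h by simp
  show ?thesis unfolding t LL_def RR_simp using lam_cyc[OF assms(1) h] by (simp add: e1 e2)
qed

lemma SS_cyc: assumes "M \<ge> 1" "t \<in> XX K"
  shows "SS K M u t + SS K M u (RR K t) + SS K M u (RR K (RR K t)) = 0"
proof -
  obtain k l l' where t: "t = (k, l, l')" by (cases t) auto
  have a1: "k - l - (l' - l) = k - l'" by linarith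
  have a2: "k - l - (- l) = k" by linarith
  have a3: "k - l' - (- l') = k" by linarith
  have a4: "k - l' - (l - l') = k - l" by linarith
  have "SS K M u (RR K t) = S3 K M u ((k - l) mod K) ((k - l) mod K - (l' - l) mod K) ((k - l) mod K - (- l) mod K)"
    unfolding t RR_simp SS_def by simp
  also have "\<dots> = S3 K M u (k - l) (k - l') k"
    by (rule S3_cong) (simp_all only: mod_mod_trivial md a1 a2)
  finally have 1: "SS K M u (RR K t) = S3 K M u (k - l) (k - l') k" .
  have "SS K M u (RR K (RR K t)) = S3 K M u ((k - l') mod K) ((k - l') mod K - (- l') mod K) ((k - l') mod K - (l - l') mod K)"
    unfolding t RR2 SS_def by simp
  also have "\<dots> = S3 K M u (k - l') k (k - l)"
    by (rule S3_cong) (simp_all only: mod_mod_trivial md a3 a4)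
  finally have 2: "SS K M u (RR K (RR K t)) = S3 K M u (k - l') k (k - l)" .
  have 0: "SS K M u t = S3 K M u k (k - l) (k - l')" unfolding t SS_def by simp
  show ?thesis unfolding 0 1 2 using S3_cyc[OF assms(1)] by simp
qed


lemma lam_total:
  assumes "M \<ge> 1" "cond_C2 K lam"
  shows "(\<Sum>t\<in>XX K. LL K lam t * SS K M u t) = 0"
proof -
  define Z where "Z = (\<Sum>t\<in>XX K. LL K lam t * SS K M u t)"
  have z1: "Z = (\<Sum>t\<in>XX K. LL K lam t * SS K M u (RR K t))"
  proof -
    have "Z = (\<Sum>t\<in>XX K. LL K lam (RR K t) * SS K M u (RR K t))"
      unfolding Z_def by (rule sum_RR[symmetric])
    also have "\<dots> = (\<Sum>t\<in>XX K. LL K lam t * SS K M u (RR K t))"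
      by (intro sum.cong) (auto simp: LL_RR[OF assms(2)])
    finally show ?thesis .
  qed
  have z2: "Z = (\<Sum>t\<in>XX K. LL K lam t * SS K M u (RR K (RR K t)))"
  proof -
    have "Z = (\<Sum>t\<in>XX K. LL K lam (RR K t) * SS K M u (RR K (RR K t)))"
      unfolding z1 by (rule sum_RR[symmetric, where F="\<lambda>t. LL K lam t * SS K M u (RR K t)"])
    also have "\<dots> = (\<Sum>t\<in>XX K. LL K lam t * SS K M u (RR K (RR K t)))"
      by (intro sum.cong) (auto simp: LL_RR[OF assms(2)])
    finally show ?thesis .
  qed
  have "3 * Z = Z + Z + Z" by simp
  also have "\<dots> = Z + (\<Sum>t\<in>XX K. LL K lam t * SS K M u (RR K t)) + (\<Sum>t\<in>XX K. LL K lam t * SS K M u (RR K (RR K t)))"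
    by (simp only: z1[symmetric] z2[symmetric])
  also have "\<dots> = (\<Sum>t\<in>XX K. LL K lam t * (SS K M u t + SS K M u (RR K t) + SS K M u (RR K (RR K t))))"
    unfolding Z_def by (simp add: distrib_left sum.distrib)
  also have "\<dots> = 0" by (intro sum.neutral) (auto simp: SS_cyc[OF assms(1)])
  finally show ?thesis unfolding Z_def by simp
qed

lemma lam_sum_XX:
  "(\<Sum>k\<in>{0..<K}. \<Sum>l\<in>{1..<K}. \<Sum>l'\<in>{1..<K} - {l}. lam k ((k - l) mod K) ((k - l') mod K) * S3 K M u k (k-l) (k-l'))
   = (\<Sum>t\<in>XX K. LL K lam t * SS K M u t)"
  unfolding XX_def LL_def SS_def by (simp add: sum.Sigma case_prod_unfold)

lemma beta_gamma:
  assumes K1: "K \<ge> 1" and C1: "cond_C1 K \<beta> \<gamma>"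
  shows "(\<Sum>k\<in>{0..<K}. \<Sum>l\<in>{1..<K}. \<beta> k l * (Y K M u k (k+l) / 2)) = (\<Sum>k\<in>{0..<K}. \<Sum>l\<in>{1..<K}. \<gamma> k l * Y K M u (k-l) k)"
proof -
  have "(\<Sum>k\<in>{0..<K}. \<Sum>l\<in>{1..<K}. \<beta> k l * (Y K M u k (k+l) / 2))
      = (\<Sum>k\<in>{0..<K}. \<Sum>l\<in>{1..<K}. \<gamma> ((k + l) mod K) l * Y K M u k (k+l))"
    by (intro sum.cong refl) (simp add: C1[unfolded cond_C1_def, rule_format])
  also have "\<dots> = (\<Sum>l\<in>{1..<K}. \<Sum>k\<in>{0..<K}. \<gamma> ((k + l) mod K) l * Y K M u k (k+l))"
    by (rule sum.swap)
  also have "\<dots> = (\<Sum>l\<in>{1..<K}. \<Sum>k\<in>{0..<K}. \<gamma> k l * Y K M u (k - l) k)"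
  proof (rule sum.cong[OF refl])
    fix l
    have "(\<Sum>k\<in>{0..<K}. \<gamma> ((k + l) mod K) l * Y K M u k (k+l))
        = (\<Sum>k\<in>{0..<K}. (\<lambda>k'. \<gamma> k' l * Y K M u (k' - l) k') ((k + l) mod K))"
    proof (intro sum.cong refl)
      fix k
      have "Y K M u k (k+l) = Y K M u ((k + l) mod K - l) ((k + l) mod K)"
        by (rule Y_cong) (simp_all only: md1 mod_mod_trivial, simp_all)
      then show "\<gamma> ((k + l) mod K) l * Y K M u k (k+l) = (\<lambda>k'. \<gamma> k' l * Y K M u (k' - l) k') ((k + l) mod K)"
        by simp
    qed
    also have "\<dots> = (\<Sum>k\<in>{0..<K}. \<gamma> k l * Y K M u (k - l) k)"
      by (rule sum_mod_shift[OF K1])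
    finally show "(\<Sum>k\<in>{0..<K}. \<gamma> ((k + l) mod K) l * Y K M u k (k+l)) = (\<Sum>k\<in>{0..<K}. \<gamma> k l * Y K M u (k - l) k)" .
  qed
  also have "\<dots> = (\<Sum>k\<in>{0..<K}. \<Sum>l\<in>{1..<K}. \<gamma> k l * Y K M u (k-l) k)" by (rule sum.swap)
  finally show ?thesis .
qed

lemma energy:
  assumes K1: "K \<ge> 1" and M1: "M \<ge> 1" and C1: "cond_C1 K \<beta> \<gamma>" and C2: "cond_C2 K lam"
  shows "(\<Sum>k\<in>{0..<K}. \<Sum>j\<in>{0..<M}. U K M u k j * B_fn K M \<alpha> \<beta> \<gamma> lam u k j) = 0"
proof -
  have "(\<Sum>k\<in>{0..<K}. \<Sum>j\<in>{0..<M}. U K M u k j * B_fn K M \<alpha> \<beta> \<gamma> lam u k j)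
     = (\<Sum>k\<in>{0..<K}. (\<Sum>l\<in>{1..<K}. \<beta> k l * (Y K M u k (k+l) / 2)) - (\<Sum>l\<in>{1..<K}. \<gamma> k l * Y K M u (k-l) k)
      + (\<Sum>l\<in>{1..<K}. \<Sum>l'\<in>{1..<K} - {l}. lam k ((k - l) mod K) ((k - l') mod K) * S3 K M u k (k-l) (k-l')))"
    unfolding B_fn_def by (intro sum.cong refl) (simp add: E1[OF M1] Ek[OF M1])
  also have "\<dots> = 0"
    using beta_gamma[OF K1 C1, where M=M and u=u] lam_total[OF M1 C2, where u=u] lam_sum_XX[where K=K and lam=lam and M=M and u=u]
    by (simp add: sum.distrib sum_subtractf)
  finally show ?thesis .
qed


definition cc :: "int \<Rightarrow> int \<Rightarrow> (int \<Rightarrow> real) \<Rightarrow> (int\<times>int\<Rightarrow>real) \<Rightarrow> int \<Rightarrow> int \<Rightarrow> real" where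
  "cc K M \<alpha> u k j = \<alpha> (k mod K) / 3 * (U K M u k (j+1) - U K M u k (j-1))"

lemma cc_sum: assumes "M \<ge> 1" shows "(\<Sum>j\<in>{0..<M}. cc K M \<alpha> u k j) = 0"
proof -
  have a: "(\<Sum>j\<in>{0..<M}. U K M u k (j+1)) = (\<Sum>j\<in>{0..<M}. U K M u k j)"
    by (rule tele[of M "\<lambda>j. U K M u k j"]) (simp_all add: U_perM assms)
  have per: "U K M u k (j + M - 1) = U K M u k (j - 1)" for j
  proof -
    have "j + M - 1 = (j - 1) + M" by simp
    then show ?thesis by (simp only: U_perM)
  qed
  have "(\<Sum>j\<in>{0..<M}. (\<lambda>j. U K M u k (j-1)) (j+1)) = (\<Sum>j\<in>{0..<M}. (\<lambda>j. U K M u k (j-1)) j)"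
    by (rule tele[of M "\<lambda>j. U K M u k (j-1)"]) (simp_all add: per assms)
  then have b: "(\<Sum>j\<in>{0..<M}. U K M u k (j-1)) = (\<Sum>j\<in>{0..<M}. U K M u k j)" by simp
  have c: "(\<Sum>j\<in>{0..<M}. U K M u k (j+1) - U K M u k (j-1)) = 0" by (simp add: sum_subtractf a b)
  have "(\<Sum>j\<in>{0..<M}. cc K M \<alpha> u k j) = \<alpha> (k mod K) / 3 * (\<Sum>j\<in>{0..<M}. U K M u k (j+1) - U K M u k (j-1))"
    unfolding cc_def by (simp add: sum_distrib_left)
  then show ?thesis using c by simp
qed

lemma energy2:
  assumes K1: "K \<ge> 1" and M1: "M \<ge> 1" and C1: "cond_C1 K \<beta> \<gamma>" and C2: "cond_C2 K lam"
  shows "(\<Sum>k\<in>{0..<K}. \<Sum>j\<in>{0..<M}. U K M u k j * B_fn K M \<alpha> \<beta> \<gamma> lam u k j - cc K M \<alpha> u k j) = 0"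
  using energy[OF assms, of u \<alpha>] cc_sum[OF M1] by (simp add: sum_subtractf)

lemma U_upd: "U K M (u(i:=t)) a b = (if (a mod K, b mod M) = i then t else U K M u a b)"
  by (simp add: U_def)

lemma kl_ne: fixes k K l :: int assumes "0 \<le> k" "k < K" "l \<in> {1..<K}" shows "(k + l) mod K \<noteq> k" "(k - l) mod K \<noteq> k"
proof -
  show "(k + l) mod K \<noteq> k"
  proof
    assume "(k + l) mod K = k"
    then have "(k+l) mod K = k mod K" using assms by (simp add: mod_pos_pos_trivial)
    then have "K dvd (k + l - k)" by (simp only: mod_eq_dvd_iff)
    then show False using ndvd1[OF assms(3)] by simp
  qed
  show "(k - l) mod K \<noteq> k"
  proof
    assume "(k - l) mod K = k"
    then have "(k-l) mod K = k mod K" using assms by (simp add: mod_pos_pos_trivial)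
    then have "K dvd (k - l - k)" by (simp only: mod_eq_dvd_iff)
    then show False using ndvd1'[OF assms(3)] by simp
  qed
qed

lemma j_ne: fixes j M :: int assumes "M \<ge> 2" "0 \<le> j" "j < M" shows "(j + 1) mod M \<noteq> j" "(j - 1) mod M \<noteq> j"
proof -
  show "(j + 1) mod M \<noteq> j"
  proof
    assume "(j + 1) mod M = j"
    then have "(j+1) mod M = j mod M" using assms by (simp add: mod_pos_pos_trivial)
    then have "M dvd (j + 1 - j)" by (simp only: mod_eq_dvd_iff)
    then show False using zdvd_imp_le[of M 1] assms by simp
  qed
  show "(j - 1) mod M \<noteq> j"
  proof
    assume "(j - 1) mod M = j"
    then have "(j - 1) mod M = j mod M" using assms by (simp add: mod_pos_pos_trivial)
    then have "M dvd (j - 1 - j)" by (simp only: mod_eq_dvd_iff)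
    then show False using zdvd_imp_le[of M 1] assms by simp
  qed
qed

context
  fixes K M k j :: int and u :: "int\<times>int \<Rightarrow> real" and t :: real
  assumes M2: "M \<ge> 2" and kr: "0 \<le> k" "k < K" and jr: "0 \<le> j" "j < M"
begin

private lemma km: "k mod K = k" using kr by simp
private lemma jm: "j mod M = j" using jr by simp
private lemma jp: "(k, (j+1) mod M) \<noteq> (k, j)" using j_ne[OF M2 jr] by simp
private lemma jmm: "(k, (j-1) mod M) \<noteq> (k, j)" using j_ne[OF M2 jr] by simp
private lemma klp: "l \<in> {1..<K} \<Longrightarrow> (k + l) mod K \<noteq> k" using kl_ne[OF kr] by simp
private lemma klm: "l \<in> {1..<K} \<Longrightarrow> (k - l) mod K \<noteq> k" using kl_ne[OF kr] by simp

lemma w_upd0: "w_fn K M (u((k,j):=t)) k j = w_fn K M u k j + (t - U K M u k j) * (t + U K M u k j + U K M u k (j+1)) / 3"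
  unfolding w_fn_def U_upd using jp by (simp add: km jm field_simps power2_eq_square)

lemma w_upd1: "w_fn K M (u((k,j):=t)) k (j-1) = w_fn K M u k (j-1) + (t - U K M u k j) * (t + U K M u k j + U K M u k (j-1)) / 3"
  unfolding w_fn_def U_upd using jmm by (simp add: km jm field_simps power2_eq_square)

lemma b_upd0: "l \<in> {1..<K} \<Longrightarrow> b_fn K M (u((k,j):=t)) l k j = b_fn K M u l k j + (t - U K M u k j) * U K M u (k+l) j / 2"
  unfolding b_fn_def U_upd using jp klp[of l] by (simp add: km jm field_simps)

lemma b_upd1: "l \<in> {1..<K} \<Longrightarrow> b_fn K M (u((k,j):=t)) l k (j-1) = b_fn K M u l k (j-1) + (t - U K M u k j) * U K M u (k+l) j / 2"
  unfolding b_fn_def U_upd using jmm klp[of l] by (simp add: km jm field_simps)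

lemma r_upd: "l \<in> {1..<K} \<Longrightarrow> r_fn K M (u((k,j):=t)) l k j' = r_fn K M u l k j'"
  unfolding r_fn_def U_upd using klm[of l] by simp

lemma p_upd: "l \<in> {1..<K} \<Longrightarrow> l' \<in> {1..<K} \<Longrightarrow> p_fn K M (u((k,j):=t)) l l' k j' = p_fn K M u l l' k j'"
  unfolding p_fn_def U_upd using klm[of l] klm[of l'] by simp

lemma G_upd0: "G_fn K M \<alpha> \<beta> \<gamma> lam (u((k,j):=t)) k j = G_fn K M \<alpha> \<beta> \<gamma> lam u k j
   + \<alpha> k * ((t - U K M u k j) * (t + U K M u k j + U K M u k (j+1)) / 3) + (\<Sum>l\<in>{1..<K}. \<beta> k l * ((t - U K M u k j) * U K M u (k+l) j / 2))"
proof -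
  have 1: "(\<Sum>l\<in>{1..<K}. \<beta> k l * b_fn K M (u((k,j):=t)) l k j) = (\<Sum>l\<in>{1..<K}. \<beta> k l * b_fn K M u l k j) + (\<Sum>l\<in>{1..<K}. \<beta> k l * ((t - U K M u k j) * U K M u (k+l) j / 2))"
    by (simp add: b_upd0 distrib_left sum.distrib)
  have 2: "(\<Sum>l\<in>{1..<K}. \<gamma> k l * r_fn K M (u((k,j):=t)) l k j) = (\<Sum>l\<in>{1..<K}. \<gamma> k l * r_fn K M u l k j)"
    by (simp add: r_upd)
  have 3: "(\<Sum>l\<in>{1..<K}. \<Sum>l'\<in>{1..<K} - {l}. lam k ((k - l) mod K) ((k - l') mod K) * p_fn K M (u((k,j):=t)) l l' k j)
         = (\<Sum>l\<in>{1..<K}. \<Sum>l'\<in>{1..<K} - {l}. lam k ((k - l) mod K) ((k - l') mod K) * p_fn K M u l l' k j)"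
    by (intro sum.cong refl) (simp add: p_upd)
  show ?thesis unfolding G_fn_def km 1 2 3 w_upd0 by (simp add: algebra_simps)
qed

lemma G_upd1: "G_fn K M \<alpha> \<beta> \<gamma> lam (u((k,j):=t)) k (j-1) = G_fn K M \<alpha> \<beta> \<gamma> lam u k (j-1)
   + \<alpha> k * ((t - U K M u k j) * (t + U K M u k j + U K M u k (j-1)) / 3) + (\<Sum>l\<in>{1..<K}. \<beta> k l * ((t - U K M u k j) * U K M u (k+l) j / 2))"
proof -
  have 1: "(\<Sum>l\<in>{1..<K}. \<beta> k l * b_fn K M (u((k,j):=t)) l k (j-1)) = (\<Sum>l\<in>{1..<K}. \<beta> k l * b_fn K M u l k (j-1)) + (\<Sum>l\<in>{1..<K}. \<beta> k l * ((t - U K M u k j) * U K M u (k+l) j / 2))"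
    by (simp add: b_upd1 distrib_left sum.distrib)
  have 2: "(\<Sum>l\<in>{1..<K}. \<gamma> k l * r_fn K M (u((k,j):=t)) l k (j-1)) = (\<Sum>l\<in>{1..<K}. \<gamma> k l * r_fn K M u l k (j-1))"
    by (simp add: r_upd)
  have 3: "(\<Sum>l\<in>{1..<K}. \<Sum>l'\<in>{1..<K} - {l}. lam k ((k - l) mod K) ((k - l') mod K) * p_fn K M (u((k,j):=t)) l l' k (j-1))
         = (\<Sum>l\<in>{1..<K}. \<Sum>l'\<in>{1..<K} - {l}. lam k ((k - l) mod K) ((k - l') mod K) * p_fn K M u l l' k (j-1))"
    by (intro sum.cong refl) (simp add: p_upd)
  show ?thesis unfolding G_fn_def km 1 2 3 w_upd1 by (simp add: algebra_simps)
qed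

lemma B_upd2: "B_fn K M \<alpha> \<beta> \<gamma> lam (u((k,j):=t)) k j = B_fn K M \<alpha> \<beta> \<gamma> lam u k j + (t - u (k,j)) * cc K M \<alpha> u k j"
proof -
  have x: "U K M u k j = u (k,j)" by (simp add: U_def km jm)
  show ?thesis unfolding B_fn_def G_upd0 G_upd1 cc_def km x[symmetric] by (simp add: field_simps)
qed

end

lemma B_M1: "B_fn K 1 \<alpha> \<beta> \<gamma> lam v k j = 0"
proof -
  have U1: "U K 1 v a b = v (a mod K, 0)" for a b by (simp add: U_def)
  show ?thesis unfolding B_fn_def G_fn_def w_fn_def b_fn_def r_fn_def p_fn_def U1 by simp
qed

lemma cc_M1: "cc K 1 \<alpha> v k j = 0"
  by (simp add: cc_def U_def)

lemma B_aff:
  assumes "M \<ge> 1" "0 \<le> k" "k < K" "0 \<le> j" "j < M"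
  shows "B_fn K M \<alpha> \<beta> \<gamma> lam (u((k,j):=t)) k j = B_fn K M \<alpha> \<beta> \<gamma> lam u k j + (t - u (k,j)) * cc K M \<alpha> u k j"
proof (cases "M = 1")
  case True then show ?thesis by (simp add: B_M1 cc_M1)
next
  case False then show ?thesis using B_upd2[where M=M and k=k and K=K and j=j and u=u and t=t] assms by simp
qed


context fixes K M :: int assumes K1: "K \<ge> 1" and M1: "M \<ge> 1"
begin

lemma C0_U: "C0 K M (\<lambda>u. U K M u a b)"
proof -
  have "(a mod K, b mod M) \<in> idx K M" using K1 M1 by (simp add: idx_def)
  then show ?thesis unfolding U_def by (rule C0_coord)
qed

lemma C0_pow2: "C0 K M f \<Longrightarrow> C0 K M (\<lambda>u. (f u)\<^sup>2)"
  unfolding power2_eq_square by (rule C0_mult)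

lemmas C0_I = C0_add C0_diff C0_mult C0_const C0_U C0_pow2

lemma C0_w: "C0 K M (\<lambda>u. w_fn K M u k j)"
  unfolding w_fn_def by (intro C0_I)
lemma C0_b: "C0 K M (\<lambda>u. b_fn K M u l k j)"
  unfolding b_fn_def by (intro C0_I)
lemma C0_r: "C0 K M (\<lambda>u. r_fn K M u l k j)"
  unfolding r_fn_def by (intro C0_I)
lemma C0_p: "C0 K M (\<lambda>u. p_fn K M u l l' k j)"
  unfolding p_fn_def by (intro C0_I)

lemma C0_G: "C0 K M (\<lambda>u. G_fn K M \<alpha> \<beta> \<gamma> lam u k j)"
  unfolding G_fn_def
  by (intro C0_add C0_mult C0_const C0_w C0_b C0_r C0_p C0_sum) auto

lemma C0_B: "C0 K M (\<lambda>u. B_fn K M \<alpha> \<beta> \<gamma> lam u k j)"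
  unfolding B_fn_def by (intro C0_diff C0_G)

lemma C0_cc: "C0 K M (\<lambda>u. cc K M \<alpha> u k j)"
  unfolding cc_def by (intro C0_I)

lemma C0_cong: assumes "C0 K M f" "\<And>u. u \<in> cfg K M \<Longrightarrow> f u = g u" shows "C0 K M g"
proof -
  have c: "continuous_on (cfg K M) f" and p: "poly_growth K M f" using assms(1) unfolding C0_def by auto
  have "continuous_on (cfg K M) g" using iffD1[OF continuous_on_cong[OF refl assms(2)] c] .
  moreover obtain C N where CN: "\<forall>u\<in>cfg K M. \<bar>f u\<bar> \<le> C * (1 + (\<Sum>i\<in>idx K M. (u i)\<^sup>2)) ^ N"
    using p unfolding poly_growth_def by blast
  then have "\<forall>u\<in>cfg K M. \<bar>g u\<bar> \<le> C * (1 + (\<Sum>i\<in>idx K M. (u i)\<^sup>2)) ^ N" using assms(2) by simp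
  then have "poly_growth K M g" unfolding poly_growth_def by blast
  ultimately show ?thesis unfolding C0_def by simp
qed

lemma drift_C1:
  assumes kj: "(k, j) \<in> idx K M" and g: "C1 K M (k,j) g"
  shows "C1 K M (k,j) (\<lambda>u. B_fn K M \<alpha> \<beta> \<gamma> lam u k j * g u)"
    and "\<And>u. u \<in> cfg K M \<Longrightarrow> pdi (k,j) (\<lambda>u. B_fn K M \<alpha> \<beta> \<gamma> lam u k j * g u) u
          = cc K M \<alpha> u k j * g u + B_fn K M \<alpha> \<beta> \<gamma> lam u k j * pdi (k,j) g u"
proof -
  have kr: "0 \<le> k" "k < K" "0 \<le> j" "j < M" using kj by (auto simp: idx_def)
  let ?B = "\<lambda>u. B_fn K M \<alpha> \<beta> \<gamma> lam u k j"
  have D: "((\<lambda>t. ?B (u((k,j):=t)) * g (u((k,j):=t))) has_real_derivative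
           cc K M \<alpha> u k j * g u + ?B u * pdi (k,j) g u) (at (u (k,j)))" if u: "u \<in> cfg K M" for u
  proof -
    have dB: "((\<lambda>t. ?B (u((k,j):=t))) has_real_derivative cc K M \<alpha> u k j) (at (u (k,j)))"
    proof -
      have "((\<lambda>t. ?B u + (t - u (k,j)) * cc K M \<alpha> u k j) has_real_derivative cc K M \<alpha> u k j) (at (u (k,j)))"
        by (auto intro!: derivative_eq_intros)
      then show ?thesis by (simp add: B_aff[OF M1 kr])
    qed
    have dg: "((\<lambda>t. g (u((k,j):=t))) has_real_derivative pdi (k,j) g u) (at (u (k,j)))"
      using g u unfolding C1_def pdi_def by (simp add: DERIV_deriv_iff_real_differentiable)
    have "((\<lambda>t. ?B (u((k,j):=t)) * g (u((k,j):=t))) has_real_derivative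
           cc K M \<alpha> u k j * g (u((k,j):=u (k,j))) + pdi (k,j) g u * ?B (u((k,j):=u (k,j)))) (at (u (k,j)))"
      by (rule DERIV_mult[OF dB dg])
    then show ?thesis by (simp add: mult.commute)
  qed
  show pd: "pdi (k,j) (\<lambda>u. ?B u * g u) u = cc K M \<alpha> u k j * g u + ?B u * pdi (k,j) g u" if "u \<in> cfg K M" for u
  proof -
    have "pdi (k,j) (\<lambda>u. ?B u * g u) u = deriv (\<lambda>t. ?B (u((k,j):=t)) * g (u((k,j):=t))) (u (k,j))"
      by (simp only: pdi_def)
    then show ?thesis using DERIV_imp_deriv[OF D[OF that]] by simp
  qed
  show "C1 K M (k,j) (\<lambda>u. ?B u * g u)"
    unfolding C1_def
  proof (intro conjI ballI)
    show "C0 K M (\<lambda>u. ?B u * g u)" using g unfolding C1_def by (intro C0_mult C0_B) auto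
    show "(\<lambda>t. ?B (u((k,j):=t)) * g (u((k,j):=t))) differentiable at (u (k,j))" if "u \<in> cfg K M" for u
      using D[OF that] unfolding real_differentiable_def by blast
    show "C0 K M (pdi (k,j) (\<lambda>u. ?B u * g u))"
      by (rule C0_cong[OF _ pd[symmetric]]) (use g in \<open>auto simp: C1_def intro!: C0_add C0_mult C0_cc C0_B\<close>)
  qed
qed

lemma classC_C1:
  assumes "f \<in> classC K M" "a \<in> idx K M"
  shows "C1 K M a f"
proof -
  obtain k j where a: "a = (k,j)" by (cases a)
  have kr: "k mod K = k" "j mod M = j" using assms(2) a by (auto simp: idx_def)
  have pd: "pd K M k j f = pdi (k,j) f" by (simp add: pd_pdi kr)
  have f0: "continuous_on (cfg K M) f" "poly_growth K M f" "partially_diff K M f"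
    using assms(1) unfolding classC_def by auto
  have X: "\<forall>(k,j)\<in>idx K M. continuous_on (cfg K M) (pd K M k j f) \<and> poly_growth K M (pd K M k j f)"
    using assms(1) unfolding classC_def by fast
  have "continuous_on (cfg K M) (pd K M k j f) \<and> poly_growth K M (pd K M k j f)"
    using bspec[OF X assms(2)[unfolded a]] by simp
  then have "C0 K M (pdi a f)" unfolding C0_def a pd[symmetric] .
  moreover have "\<forall>u\<in>cfg K M. (\<lambda>t. f (u(a:=t))) differentiable at (u a)"
    using f0(3) assms(2) unfolding partially_diff_def by blast
  ultimately show ?thesis using f0 unfolding C1_def C0_def by blast
qed

lemma classC_C1':
  assumes "f \<in> classC K M" "a \<in> idx K M" "b \<in> idx K M"
  shows "C1 K M a (pdi b f)"
proof -
  obtain k j where a: "a = (k,j)" by (cases a)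
  obtain k' j' where b: "b = (k',j')" by (cases b)
  have kr: "k mod K = k" "j mod M = j" "k' mod K = k'" "j' mod M = j'" using assms(2,3) a b by (auto simp: idx_def)
  have pd: "pd K M k' j' f = pdi b f" by (simp add: pd_pdi kr b)
  have pd2: "pd K M k j (pdi b f) = pdi a (pdi b f)" by (simp add: pd_pdi kr a)
  have c: "continuous_on (cfg K M) (pd K M k' j' f) \<and> poly_growth K M (pd K M k' j' f)
         \<and> partially_diff K M (pd K M k' j' f)
         \<and> continuous_on (cfg K M) (pd K M k j (pd K M k' j' f)) \<and> poly_growth K M (pd K M k j (pd K M k' j' f))"
    using assms unfolding classC_def a b by fast
  show ?thesis using c assms(2) unfolding C1_def C0_def partially_diff_def pd pd2 a by blast
qed

end


definition Zp :: "int \<Rightarrow> int \<Rightarrow> ((int\<times>int\<Rightarrow>real)\<Rightarrow>real) \<Rightarrow> bool" where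
  "Zp K M F \<longleftrightarrow> integrable (mu K M) F \<and> integral\<^sup>L (mu K M) F = 0"

lemma Zp_add: "Zp K M F \<Longrightarrow> Zp K M G \<Longrightarrow> Zp K M (\<lambda>u. F u + G u)" unfolding Zp_def by simp
lemma Zp_diff: "Zp K M F \<Longrightarrow> Zp K M G \<Longrightarrow> Zp K M (\<lambda>u. F u - G u)" unfolding Zp_def by simp
lemma Zp_cmult: "Zp K M F \<Longrightarrow> Zp K M (\<lambda>u. c * F u)" unfolding Zp_def by simp
lemma Zp_zero: "Zp K M (\<lambda>u. 0)" unfolding Zp_def by simp
lemma Zp_cong: assumes "Zp K M F" "\<And>u. u \<in> cfg K M \<Longrightarrow> F u = G u" shows "Zp K M G"
proof -
  have e: "\<And>u. u \<in> space (mu K M) \<Longrightarrow> F u = G u" using assms(2) by (simp add: space_mu)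
  have i: "integrable (mu K M) F = integrable (mu K M) G"
    by (intro Bochner_Integration.integrable_cong refl) (simp add: e)
  have j: "integral\<^sup>L (mu K M) F = integral\<^sup>L (mu K M) G"
    by (intro Bochner_Integration.integral_cong refl) (simp add: e)
  show ?thesis using assms(1) i j unfolding Zp_def by simp
qed
lemma Zp_sum: "finite A \<Longrightarrow> (\<And>a. a \<in> A \<Longrightarrow> Zp K M (F a)) \<Longrightarrow> Zp K M (\<lambda>u. \<Sum>a\<in>A. F a u)"
  by (induction A rule: finite_induct) (auto intro: Zp_zero Zp_add)

definition NN :: "int \<Rightarrow> int \<Rightarrow> int\<times>int \<Rightarrow> ((int\<times>int\<Rightarrow>real)\<Rightarrow>real) \<Rightarrow> ((int\<times>int\<Rightarrow>real)\<Rightarrow>real) \<Rightarrow> (int\<times>int\<Rightarrow>real) \<Rightarrow> real" where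
  "NN K M i h g u = pdi i h u * g u + h u * pdi i g u - u i * h u * g u"

lemma ibp_Z:
  assumes i: "i \<in> idx K M" and h: "C1 K M i h" and g: "C1 K M i g"
  shows "Zp K M (NN K M i h g)"
proof -
  note h0 = C1_C0[OF h] and h1 = C1_C0'[OF h] and g0 = C1_C0[OF g] and g1 = C1_C0'[OF g]
  have iA: "integrable (mu K M) (\<lambda>u. pdi i h u * g u)" by (intro C0_int C0_mult h1 g0)
  have iB: "integrable (mu K M) (\<lambda>u. h u * pdi i g u)" by (intro C0_int C0_mult h0 g1)
  have iC: "integrable (mu K M) (\<lambda>u. u i * h u * g u)" by (intro C0_int C0_mult h0 g0 C0_coord i)
  have "(\<integral>u. pdi i h u * g u \<partial>mu K M) = (\<integral>u. h u * (u i * g u - pdi i g u) \<partial>mu K M)"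
    by (rule ibp[OF i h g])
  also have "\<dots> = (\<integral>u. u i * h u * g u - h u * pdi i g u \<partial>mu K M)"
    by (rule Bochner_Integration.integral_cong) (auto simp: algebra_simps)
  also have "\<dots> = (\<integral>u. u i * h u * g u \<partial>mu K M) - (\<integral>u. h u * pdi i g u \<partial>mu K M)"
    using iB iC by simp
  finally have eq: "(\<integral>u. pdi i h u * g u \<partial>mu K M) = (\<integral>u. u i * h u * g u \<partial>mu K M) - (\<integral>u. h u * pdi i g u \<partial>mu K M)" .
  have "integrable (mu K M) (NN K M i h g)" unfolding NN_def[abs_def] using iA iB iC by simp
  moreover have "integral\<^sup>L (mu K M) (NN K M i h g) = 0"
    unfolding NN_def[abs_def] using iA iB iC eq by simp
  ultimately show ?thesis unfolding Zp_def by simp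
qed

theorem lemma3p2:
  fixes K M :: int and \<epsilon> :: real
    and \<alpha> :: "int \<Rightarrow> real" and \<beta> \<gamma> :: "int \<Rightarrow> int \<Rightarrow> real" and lam :: "int \<Rightarrow> int \<Rightarrow> int \<Rightarrow> real"
    and f g :: "(int \<times> int \<Rightarrow> real) \<Rightarrow> real"
  assumes "K \<ge> 1" and "M \<ge> 1"
    and "cond_C1 K \<beta> \<gamma>" and "cond_C2 K lam"
    and "\<epsilon> > 0"
    and "f \<in> classC K M" and "g \<in> classC K M"
  shows "(\<integral>u. gen K M \<alpha> \<beta> \<gamma> lam \<epsilon> f u * g u \<partial>mu K M)
       = (\<integral>u. f u * gen K M \<alpha> \<beta> \<gamma> lam (-\<epsilon>) g u \<partial>mu K M)"
proof -
  have K1: "K \<ge> 1" and M1: "M \<ge> 1" using assms by auto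
  note fC = assms(6) and gC = assms(7)
  define a where "a k j = (k, (j+1) mod M)" for k j :: int
  define Bf where "Bf u k j = B_fn K M \<alpha> \<beta> \<gamma> lam u k j" for u k j
  define T where "T c F u k j = (1/2) * (pdi (a k j) (pdi (a k j) F) u - pdi (a k j) (pdi (k,j) F) u
        - pdi (k,j) (pdi (a k j) F) u + pdi (k,j) (pdi (k,j) F) u)
      - (1/2) * (u (a k j) - u (k,j)) * (pdi (a k j) F u - pdi (k,j) F u)
      + c * Bf u k j * pdi (k,j) F u" for c F u k j
  have gen_eq: "gen K M \<alpha> \<beta> \<gamma> lam c F u = (\<Sum>k\<in>{0..<K}. \<Sum>j\<in>{0..<M}. T c F u k j)" for c F u
    unfolding gen_def T_def a_def Bf_def by (intro sum.cong refl) (simp add: pd_pdi U_def)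
  have ia: "a k j \<in> idx K M" if "k \<in> {0..<K}" "j \<in> {0..<M}" for k j
    using that M1 by (simp add: a_def idx_def)
  have ib: "(k, j) \<in> idx K M" if "k \<in> {0..<K}" "j \<in> {0..<M}" for k j
    using that by (simp add: idx_def)
  have C0T: "C0 K M (\<lambda>u. T c F u k j)" if F: "F \<in> classC K M" and kj: "k \<in> {0..<K}" "j \<in> {0..<M}" for c F k j
  proof -
    note A = ia[OF kj] and B = ib[OF kj]
    show ?thesis unfolding T_def Bf_def
      by (intro C0_add C0_diff C0_mult C0_const C0_coord A B C0_B[OF K1 M1]
          C1_C0[OF classC_C1[OF K1 M1 F A]] C1_C0[OF classC_C1[OF K1 M1 F B]]
          C1_C0'[OF classC_C1[OF K1 M1 F A]] C1_C0'[OF classC_C1[OF K1 M1 F B]]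
          C1_C0'[OF classC_C1'[OF K1 M1 F A A]] C1_C0'[OF classC_C1'[OF K1 M1 F A B]]
          C1_C0'[OF classC_C1'[OF K1 M1 F B A]] C1_C0'[OF classC_C1'[OF K1 M1 F B B]])
  qed
  have C0gen: "C0 K M (gen K M \<alpha> \<beta> \<gamma> lam c F)" if "F \<in> classC K M" for c F
  proof -
    have "C0 K M (\<lambda>u. \<Sum>k\<in>{0..<K}. \<Sum>j\<in>{0..<M}. T c F u k j)"
      by (intro C0_sum finite_atLeastLessThan_int C0T[OF that]) auto
    then show ?thesis unfolding gen_eq[abs_def] by simp
  qed
  have f0: "C0 K M f" and g0: "C0 K M g"
    using classC_C1[OF K1 M1 fC, of "(0,0)"] classC_C1[OF K1 M1 gC, of "(0,0)"] K1 M1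
    by (auto simp: idx_def dest: C1_C0)
  have Zkj: "Zp K M (\<lambda>u. T \<epsilon> f u k j * g u - f u * T (-\<epsilon>) g u k j
      - \<epsilon> * (f u * g u) * (u (k,j) * Bf u k j - cc K M \<alpha> u k j))"
    if kj: "k \<in> {0..<K}" "j \<in> {0..<M}" for k j
  proof -
    define A where "A = a k j"
    define B where "B = (k, j)"
    have iA: "A \<in> idx K M" unfolding A_def by (rule ia[OF kj])
    have iB: "B \<in> idx K M" unfolding B_def by (rule ib[OF kj])
    note cf = classC_C1[OF K1 M1 fC] and cg = classC_C1[OF K1 M1 gC]
    note cf' = classC_C1'[OF K1 M1 fC] and cg' = classC_C1'[OF K1 M1 gC]
    have N1: "Zp K M (NN K M A (pdi A f) g)" by (rule ibp_Z[OF iA cf'[OF iA iA] cg[OF iA]])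
    have N2: "Zp K M (NN K M A (pdi B f) g)" by (rule ibp_Z[OF iA cf'[OF iA iB] cg[OF iA]])
    have N3: "Zp K M (NN K M B (pdi A f) g)" by (rule ibp_Z[OF iB cf'[OF iB iA] cg[OF iB]])
    have N4: "Zp K M (NN K M B (pdi B f) g)" by (rule ibp_Z[OF iB cf'[OF iB iB] cg[OF iB]])
    have N5: "Zp K M (NN K M A (pdi A g) f)" by (rule ibp_Z[OF iA cg'[OF iA iA] cf[OF iA]])
    have N6: "Zp K M (NN K M A (pdi B g) f)" by (rule ibp_Z[OF iA cg'[OF iA iB] cf[OF iA]])
    have N7: "Zp K M (NN K M B (pdi A g) f)" by (rule ibp_Z[OF iB cg'[OF iB iA] cf[OF iB]])
    have N8: "Zp K M (NN K M B (pdi B g) f)" by (rule ibp_Z[OF iB cg'[OF iB iB] cf[OF iB]])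
    have dC: "C1 K M (k,j) (\<lambda>u. Bf u k j * g u)"
      unfolding Bf_def by (rule drift_C1(1)[OF K1 M1 iB[unfolded B_def] cg[OF iB[unfolded B_def]]])
    have dE: "pdi (k,j) (\<lambda>u. Bf u k j * g u) u = cc K M \<alpha> u k j * g u + Bf u k j * pdi (k,j) g u"
      if "u \<in> cfg K M" for u
      unfolding Bf_def by (rule drift_C1(2)[OF K1 M1 iB[unfolded B_def] cg[OF iB[unfolded B_def]] that])
    have N9: "Zp K M (NN K M B f (\<lambda>u. Bf u k j * g u))"
      unfolding B_def by (rule ibp_Z[OF iB[unfolded B_def] cf[OF iB[unfolded B_def]] dC])
    have comb: "Zp K M (\<lambda>u. (1/2) * NN K M A (pdi A f) g u - (1/2) * NN K M A (pdi B f) g u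
        - (1/2) * NN K M B (pdi A f) g u + (1/2) * NN K M B (pdi B f) g u
        - (1/2) * NN K M A (pdi A g) f u + (1/2) * NN K M A (pdi B g) f u
        + (1/2) * NN K M B (pdi A g) f u - (1/2) * NN K M B (pdi B g) f u
        + \<epsilon> * NN K M B f (\<lambda>u. Bf u k j * g u) u)"
      by (intro Zp_add Zp_diff Zp_cmult N1 N2 N3 N4 N5 N6 N7 N8 N9)
    show ?thesis
    proof (rule Zp_cong[OF comb])
      fix u assume u: "u \<in> cfg K M"
      show "(1/2) * NN K M A (pdi A f) g u - (1/2) * NN K M A (pdi B f) g u
        - (1/2) * NN K M B (pdi A f) g u + (1/2) * NN K M B (pdi B f) g u
        - (1/2) * NN K M A (pdi A g) f u + (1/2) * NN K M A (pdi B g) f u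
        + (1/2) * NN K M B (pdi A g) f u - (1/2) * NN K M B (pdi B g) f u
        + \<epsilon> * NN K M B f (\<lambda>u. Bf u k j * g u) u
        = T \<epsilon> f u k j * g u - f u * T (-\<epsilon>) g u k j
          - \<epsilon> * (f u * g u) * (u (k,j) * Bf u k j - cc K M \<alpha> u k j)"
        unfolding NN_def T_def A_def[symmetric] B_def[symmetric] using dE[OF u]
        unfolding B_def[symmetric] by (simp add: algebra_simps add_divide_distrib diff_divide_distrib)
    qed
  qed
  have Zall: "Zp K M (\<lambda>u. \<Sum>k\<in>{0..<K}. \<Sum>j\<in>{0..<M}. T \<epsilon> f u k j * g u - f u * T (-\<epsilon>) g u k j
      - \<epsilon> * (f u * g u) * (u (k,j) * Bf u k j - cc K M \<alpha> u k j))"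
    by (intro Zp_sum finite_atLeastLessThan_int Zkj)
  have Zgen: "Zp K M (\<lambda>u. gen K M \<alpha> \<beta> \<gamma> lam \<epsilon> f u * g u - f u * gen K M \<alpha> \<beta> \<gamma> lam (-\<epsilon>) g u)"
  proof (rule Zp_cong[OF Zall])
    fix u assume u: "u \<in> cfg K M"
    have E: "(\<Sum>k\<in>{0..<K}. \<Sum>j\<in>{0..<M}. u (k,j) * Bf u k j - cc K M \<alpha> u k j) = 0"
    proof -
      have "(\<Sum>k\<in>{0..<K}. \<Sum>j\<in>{0..<M}. u (k,j) * Bf u k j - cc K M \<alpha> u k j)
          = (\<Sum>k\<in>{0..<K}. \<Sum>j\<in>{0..<M}. U K M u k j * B_fn K M \<alpha> \<beta> \<gamma> lam u k j - cc K M \<alpha> u k j)"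
        unfolding Bf_def by (intro sum.cong refl) (simp add: U_def)
      also have "\<dots> = 0" by (rule energy2[OF K1 M1 assms(3,4)])
      finally show ?thesis .
    qed
    define W where "W k j = u (k,j) * Bf u k j - cc K M \<alpha> u k j" for k j
    have W0: "(\<Sum>k\<in>{0..<K}. \<Sum>j\<in>{0..<M}. W k j) = 0" unfolding W_def by (rule E)
    have "(\<Sum>k\<in>{0..<K}. \<Sum>j\<in>{0..<M}. T \<epsilon> f u k j * g u - f u * T (-\<epsilon>) g u k j
      - \<epsilon> * (f u * g u) * (u (k,j) * Bf u k j - cc K M \<alpha> u k j))
      = (\<Sum>k\<in>{0..<K}. \<Sum>j\<in>{0..<M}. T \<epsilon> f u k j * g u - f u * T (-\<epsilon>) g u k j
      - \<epsilon> * (f u * g u) * W k j)" unfolding W_def ..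
    also have "\<dots> = (\<Sum>k\<in>{0..<K}. \<Sum>j\<in>{0..<M}. T \<epsilon> f u k j) * g u - f u * (\<Sum>k\<in>{0..<K}. \<Sum>j\<in>{0..<M}. T (-\<epsilon>) g u k j)
        - \<epsilon> * (f u * g u) * (\<Sum>k\<in>{0..<K}. \<Sum>j\<in>{0..<M}. W k j)"
      by (simp add: sum_subtractf sum_distrib_left sum_distrib_right)
    also have "\<dots> = gen K M \<alpha> \<beta> \<gamma> lam \<epsilon> f u * g u - f u * gen K M \<alpha> \<beta> \<gamma> lam (-\<epsilon>) g u"
      unfolding gen_eq W0 by simp
    finally show "(\<Sum>k\<in>{0..<K}. \<Sum>j\<in>{0..<M}. T \<epsilon> f u k j * g u - f u * T (-\<epsilon>) g u k j
      - \<epsilon> * (f u * g u) * (u (k,j) * Bf u k j - cc K M \<alpha> u k j))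
      = gen K M \<alpha> \<beta> \<gamma> lam \<epsilon> f u * g u - f u * gen K M \<alpha> \<beta> \<gamma> lam (-\<epsilon>) g u" .
  qed
  have i1: "integrable (mu K M) (\<lambda>u. gen K M \<alpha> \<beta> \<gamma> lam \<epsilon> f u * g u)"
    by (intro C0_int C0_mult C0gen fC g0)
  have i2: "integrable (mu K M) (\<lambda>u. f u * gen K M \<alpha> \<beta> \<gamma> lam (-\<epsilon>) g u)"
    by (intro C0_int C0_mult C0gen gC f0)
  show ?thesis using Zgen i1 i2 unfolding Zp_def by simp
qed


end
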